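(* Let $\mathfrak{n}$ be the real $7$-dimensional Lie algebra with basis $e_1,\dots,e_7$ whose nonzero brackets (up to antisymmetry) are $[e_1,e_2]=e_4$, $[e_1,e_4]=e_6$, $[e_1,e_5]=-e_7$, $[e_1,e_6]=e_7$, $[e_2,e_3]=e_5$, $[e_2,e_5]=e_7$, $[e_3,e_4]=e_7$. Then $\mathfrak{n}$ is not an Einstein nilradical.
   Context: A real nilpotent Lie algebra $\mathfrak{n}$ is called an Einstein nilradical if it admits an inner product such that the left-invariant Riemannian metric it defines on the simply connected nilpotent Lie group with Lie algebra $\mathfrak{n}$ is a nilsoliton, i.e. its Ricci operator satisfies $\mathrm{Ric}=c\,\mathrm{Id}+D$ for some $c\in\mathbb{R}$ and some derivation $D$ of $\mathfrak{n}$. Brackets of basis elements not listed are zero. *)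

theory Defs
  imports "HOL-Analysis.Analysis"
begin

definition is_inner_product :: "(real^'n \<Rightarrow> real^'n \<Rightarrow> real) \<Rightarrow> bool" where
  "is_inner_product ip \<longleftrightarrow> bilinear ip \<and> (\<forall>x y. ip x y = ip y x) \<and> (\<forall>x. x \<noteq> 0 \<longrightarrow> ip x x > 0)"

text \<open>Levi-Civita connection of the left-invariant metric, on left-invariant fields
  (Koszul formula): 2 ip (nabla_X Y) Z = ip [X,Y] Z - ip [Y,Z] X + ip [Z,X] Y.\<close>

definition levi_civita :: "(real^'n \<Rightarrow> real^'n \<Rightarrow> real^'n) \<Rightarrow> (real^'n \<Rightarrow> real^'n \<Rightarrow> real)
    \<Rightarrow> real^'n \<Rightarrow> real^'n \<Rightarrow> real^'n" where
  "levi_civita B ip X Y =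
     (THE W. \<forall>Z. ip W Z = (ip (B X Y) Z - ip (B Y Z) X + ip (B Z X) Y) / 2)"

definition curvature :: "(real^'n \<Rightarrow> real^'n \<Rightarrow> real^'n) \<Rightarrow> (real^'n \<Rightarrow> real^'n \<Rightarrow> real)
    \<Rightarrow> real^'n \<Rightarrow> real^'n \<Rightarrow> real^'n \<Rightarrow> real^'n" where
  "curvature B ip X Y Z =
     levi_civita B ip X (levi_civita B ip Y Z) - levi_civita B ip Y (levi_civita B ip X Z)
     - levi_civita B ip (B X Y) Z"

definition ricci :: "(real^'n \<Rightarrow> real^'n \<Rightarrow> real^'n) \<Rightarrow> (real^'n \<Rightarrow> real^'n \<Rightarrow> real)
    \<Rightarrow> real^'n \<Rightarrow> real^'n \<Rightarrow> real" where
  "ricci B ip Y Z = (\<Sum>i\<in>UNIV. (curvature B ip (axis i 1) Y Z) $ i)"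

definition is_derivation :: "(real^'n \<Rightarrow> real^'n \<Rightarrow> real^'n) \<Rightarrow> (real^'n \<Rightarrow> real^'n) \<Rightarrow> bool" where
  "is_derivation B D \<longleftrightarrow> linear D \<and> (\<forall>x y. D (B x y) = B (D x) y + B x (D y))"

text \<open>Nilsoliton: Ric = c Id + D for a derivation D, where the Ricci operator Ric is
  defined by ip (Ric Y) Z = ric(Y,Z).\<close>

definition is_nilsoliton :: "(real^'n \<Rightarrow> real^'n \<Rightarrow> real^'n) \<Rightarrow> (real^'n \<Rightarrow> real^'n \<Rightarrow> real) \<Rightarrow> bool" where
  "is_nilsoliton B ip \<longleftrightarrow>
     (\<exists>c D. is_derivation B D \<and> (\<forall>Y Z. ricci B ip Y Z = ip (c *\<^sub>R Y + D Y) Z))"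

definition einstein_nilradical :: "(real^'n \<Rightarrow> real^'n \<Rightarrow> real^'n) \<Rightarrow> bool" where
  "einstein_nilradical B \<longleftrightarrow> (\<exists>ip. is_inner_product ip \<and> is_nilsoliton B ip)"

text \<open>The specific 7-dimensional algebra. Basis vector e_k is the k-th standard basis
  vector (index k taken in the numeral type 7, so e_7 corresponds to index 0).\<close>

definition e7 :: "nat \<Rightarrow> real^7" where
  "e7 k = axis (of_nat k :: 7) 1"

definition br7 :: "nat \<Rightarrow> nat \<Rightarrow> real^7" where
  "br7 a b =
    (if (a,b) = (1,2) then e7 4 else if (a,b) = (2,1) then - e7 4
     else if (a,b) = (1,4) then e7 6 else if (a,b) = (4,1) then - e7 6
     else if (a,b) = (1,5) then - e7 7 else if (a,b) = (5,1) then e7 7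
     else if (a,b) = (1,6) then e7 7 else if (a,b) = (6,1) then - e7 7
     else if (a,b) = (2,3) then e7 5 else if (a,b) = (3,2) then - e7 5
     else if (a,b) = (2,5) then e7 7 else if (a,b) = (5,2) then - e7 7
     else if (a,b) = (3,4) then e7 7 else if (a,b) = (4,3) then - e7 7
     else 0)"

definition bracket7 :: "real^7 \<Rightarrow> real^7 \<Rightarrow> real^7" where
  "bracket7 x y = (\<Sum>a\<in>{1..7}. \<Sum>b\<in>{1..7}. (x \<bullet> e7 a * (y \<bullet> e7 b)) *\<^sub>R br7 a b)"

end

theory Submission
  imports Defs
begin


lemma set17: "{1..7::nat} = {1,2,3,4,5,6,7}" by auto

lemma inj7: "inj_on (of_nat :: nat \<Rightarrow> 7) {1..7}"
  unfolding inj_on_def set17 by auto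

lemma surj7: "(UNIV :: 7 set) = of_nat ` {1..7}"
proof -
  have "x \<in> of_nat ` {1..7}" for x :: 7
  proof (cases x rule: bit1_cases)
    case (of_int z)
    then have "z \<in> {0,1,2,3,4,5,6}" by auto
    then show ?thesis using of_int
      apply (auto simp: image_iff)
      apply (rule bexI[of _ 7]; simp)
      apply (rule bexI[of _ 1]; simp)
      apply (rule bexI[of _ 2]; simp)
      apply (rule bexI[of _ 3]; simp)
      apply (rule bexI[of _ 4]; simp)
      apply (rule bexI[of _ 5]; simp)
      apply (rule bexI[of _ 6]; simp)
      done
  qed
  then show ?thesis by auto
qed

lemma e7_inner: "a \<in> {1..7} \<Longrightarrow> b \<in> {1..7} \<Longrightarrow> e7 a \<bullet> e7 b = (if a = b then 1 else 0)"
  using inj7 unfolding e7_def inj_on_def by (auto simp: inner_axis_axis)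

lemma decomp7: "x = (\<Sum>k\<in>{1..7}. (x \<bullet> e7 k) *\<^sub>R e7 k)"
proof -
  have "x = (\<Sum>i\<in>UNIV. (x$i) *s axis i 1)" by (simp add: basis_expansion)
  also have "\<dots> = (\<Sum>i\<in>UNIV. (x$i) *\<^sub>R axis i (1::real))" by (simp add: scalar_mult_eq_scaleR)
  also have "\<dots> = (\<Sum>k\<in>{1..7}. (x $ of_nat k) *\<^sub>R axis (of_nat k) (1::real))"
    unfolding surj7 by (subst sum.reindex[OF inj7]) simp
  also have "\<dots> = (\<Sum>k\<in>{1..7}. (x \<bullet> e7 k) *\<^sub>R e7 k)"
    by (simp add: e7_def inner_axis)
  finally show ?thesis .
qed

lemma e7n: "e7 1 \<bullet> e7 1 = 1" "e7 1 \<bullet> e7 2 = 0" "e7 1 \<bullet> e7 3 = 0" "e7 1 \<bullet> e7 4 = 0" "e7 1 \<bullet> e7 5 = 0" "e7 1 \<bullet> e7 6 = 0" "e7 1 \<bullet> e7 7 = 0" "e7 2 \<bullet> e7 1 = 0" "e7 2 \<bullet> e7 2 = 1" "e7 2 \<bullet> e7 3 = 0" "e7 2 \<bullet> e7 4 = 0" "e7 2 \<bullet> e7 5 = 0" "e7 2 \<bullet> e7 6 = 0" "e7 2 \<bullet> e7 7 = 0" "e7 3 \<bullet> e7 1 = 0" "e7 3 \<bullet> e7 2 = 0" "e7 3 \<bullet> e7 3 = 1" "e7 3 \<bullet> e7 4 = 0" "e7 3 \<bullet> e7 5 = 0" "e7 3 \<bullet> e7 6 = 0" "e7 3 \<bullet>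 e7 7 = 0" "e7 4 \<bullet> e7 1 = 0" "e7 4 \<bullet> e7 2 = 0" "e7 4 \<bullet> e7 3 = 0" "e7 4 \<bullet> e7 4 = 1" "e7 4 \<bullet> e7 5 = 0" "e7 4 \<bullet> e7 6 = 0" "e7 4 \<bullet> e7 7 = 0" "e7 5 \<bullet> e7 1 = 0" "e7 5 \<bullet> e7 2 = 0" "e7 5 \<bullet> e7 3 = 0" "e7 5 \<bullet> e7 4 = 0" "e7 5 \<bullet> e7 5 = 1" "e7 5 \<bullet> e7 6 = 0" "e7 5 \<bullet> e7 7 = 0" "e7 6 \<bullet> e7 1 = 0" "e7 6 \<bullet> e7 2 = 0" "e7 6 \<bullet> e7 3 = 0" "e7 6 \<bullet> e7 4 = 0" "e7 6 \<bullet> e7 5 = 0" "e7 6 \<bullet> e7 6 = 1" "e7 6 \<bullet> e7 7 = 0" "e7 7 \<bullet> e7 1 = 0" "e7 7 \<bullet> e7 2 = 0" "e7 7 \<bullet> e7 3 = 0" "e7 7 \<bullet> e7 4 = 0" "e7 7 \<bullet> e7 5 = 0" "e7 7 \<bullet> e7 6 = 0" "e7 7 \<bullet> e7 7 = 1"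
  by (simp_all add: e7_inner)

lemma vec7_eqI: "(\<And>k. k \<in> {1..7} \<Longrightarrow> x \<bullet> e7 k = y \<bullet> e7 k) \<Longrightarrow> x = y"
  by (metis (no_types, lifting) decomp7 sum.cong)

lemma bil7: "bilinear bracket7"
  unfolding bilinear_def linear_iff bracket7_def
  by (auto simp: inner_add_left scaleR_sum_right sum.distrib scaleR_add_left algebra_simps)

lemma brc1: "bracket7 x y \<bullet> e7 1 = 0"
  unfolding bracket7_def br7_def set17 by (simp add: inner_sum_left e7_inner algebra_simps)
lemma brc2: "bracket7 x y \<bullet> e7 2 = 0"
  unfolding bracket7_def br7_def set17 by (simp add: inner_sum_left e7_inner algebra_simps)
lemma brc3: "bracket7 x y \<bullet> e7 3 = 0"
  unfolding bracket7_def br7_def set17 by (simp add: inner_sum_left e7_inner algebra_simps)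
lemma brc4: "bracket7 x y \<bullet> e7 4 = x \<bullet> e7 1 * (y \<bullet> e7 2) - x \<bullet> e7 2 * (y \<bullet> e7 1)"
  unfolding bracket7_def br7_def set17 by (simp add: inner_sum_left e7_inner algebra_simps)
lemma brc5: "bracket7 x y \<bullet> e7 5 = x \<bullet> e7 2 * (y \<bullet> e7 3) - x \<bullet> e7 3 * (y \<bullet> e7 2)"
  unfolding bracket7_def br7_def set17 by (simp add: inner_sum_left e7_inner algebra_simps)
lemma brc6: "bracket7 x y \<bullet> e7 6 = x \<bullet> e7 1 * (y \<bullet> e7 4) - x \<bullet> e7 4 * (y \<bullet> e7 1)"
  unfolding bracket7_def br7_def set17 by (simp add: inner_sum_left e7_inner algebra_simps)
lemma brc7: "bracket7 x y \<bullet> e7 7 = - (x \<bullet> e7 1 * (y \<bullet> e7 5) - x \<bullet> e7 5 * (y \<bullet> e7 1)) + (x \<bullet> e7 1 * (y \<bullet> e7 6) - x \<bullet> e7 6 * (y \<bullet> e7 1))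
   + (x \<bullet> e7 2 * (y \<bullet> e7 5) - x \<bullet> e7 5 * (y \<bullet> e7 2)) + (x \<bullet> e7 3 * (y \<bullet> e7 4) - x \<bullet> e7 4 * (y \<bullet> e7 3))"
  unfolding bracket7_def br7_def set17 by (simp add: inner_sum_left e7_inner algebra_simps)

lemmas brc = brc1 brc2 brc3 brc4 brc5 brc6 brc7 brc1[unfolded One_nat_def] brc4[unfolded One_nat_def] brc6[unfolded One_nat_def] brc7[unfolded One_nat_def]

lemma anti7: "bracket7 x y = - bracket7 y x"
  apply (rule vec7_eqI)
  apply (unfold set17)
  apply (auto simp: brc)
  done

lemma bb_1_1: "bracket7 (e7 1) (e7 1) = 0"
  apply (rule vec7_eqI) apply (unfold set17) by (auto simp: brc e7_inner)

lemma bb_1_2: "bracket7 (e7 1) (e7 2) = e7 4"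
  apply (rule vec7_eqI) apply (unfold set17) by (auto simp: brc e7_inner)

lemma bb_1_3: "bracket7 (e7 1) (e7 3) = 0"
  apply (rule vec7_eqI) apply (unfold set17) by (auto simp: brc e7_inner)

lemma bb_1_4: "bracket7 (e7 1) (e7 4) = e7 6"
  apply (rule vec7_eqI) apply (unfold set17) by (auto simp: brc e7_inner)

lemma bb_1_5: "bracket7 (e7 1) (e7 5) = - e7 7"
  apply (rule vec7_eqI) apply (unfold set17) by (auto simp: brc e7_inner)

lemma bb_1_6: "bracket7 (e7 1) (e7 6) = e7 7"
  apply (rule vec7_eqI) apply (unfold set17) by (auto simp: brc e7_inner)

lemma bb_1_7: "bracket7 (e7 1) (e7 7) = 0"
  apply (rule vec7_eqI) apply (unfold set17) by (auto simp: brc e7_inner)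

lemma bb_2_1: "bracket7 (e7 2) (e7 1) = - e7 4"
  apply (rule vec7_eqI) apply (unfold set17) by (auto simp: brc e7_inner)

lemma bb_2_2: "bracket7 (e7 2) (e7 2) = 0"
  apply (rule vec7_eqI) apply (unfold set17) by (auto simp: brc e7_inner)

lemma bb_2_3: "bracket7 (e7 2) (e7 3) = e7 5"
  apply (rule vec7_eqI) apply (unfold set17) by (auto simp: brc e7_inner)

lemma bb_2_4: "bracket7 (e7 2) (e7 4) = 0"
  apply (rule vec7_eqI) apply (unfold set17) by (auto simp: brc e7_inner)

lemma bb_2_5: "bracket7 (e7 2) (e7 5) = e7 7"
  apply (rule vec7_eqI) apply (unfold set17) by (auto simp: brc e7_inner)

lemma bb_2_6: "bracket7 (e7 2) (e7 6) = 0"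
  apply (rule vec7_eqI) apply (unfold set17) by (auto simp: brc e7_inner)

lemma bb_2_7: "bracket7 (e7 2) (e7 7) = 0"
  apply (rule vec7_eqI) apply (unfold set17) by (auto simp: brc e7_inner)

lemma bb_3_1: "bracket7 (e7 3) (e7 1) = 0"
  apply (rule vec7_eqI) apply (unfold set17) by (auto simp: brc e7_inner)

lemma bb_3_2: "bracket7 (e7 3) (e7 2) = - e7 5"
  apply (rule vec7_eqI) apply (unfold set17) by (auto simp: brc e7_inner)

lemma bb_3_3: "bracket7 (e7 3) (e7 3) = 0"
  apply (rule vec7_eqI) apply (unfold set17) by (auto simp: brc e7_inner)

lemma bb_3_4: "bracket7 (e7 3) (e7 4) = e7 7"
  apply (rule vec7_eqI) apply (unfold set17) by (auto simp: brc e7_inner)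

lemma bb_3_5: "bracket7 (e7 3) (e7 5) = 0"
  apply (rule vec7_eqI) apply (unfold set17) by (auto simp: brc e7_inner)

lemma bb_3_6: "bracket7 (e7 3) (e7 6) = 0"
  apply (rule vec7_eqI) apply (unfold set17) by (auto simp: brc e7_inner)

lemma bb_3_7: "bracket7 (e7 3) (e7 7) = 0"
  apply (rule vec7_eqI) apply (unfold set17) by (auto simp: brc e7_inner)

lemma bb_4_1: "bracket7 (e7 4) (e7 1) = - e7 6"
  apply (rule vec7_eqI) apply (unfold set17) by (auto simp: brc e7_inner)

lemma bb_4_2: "bracket7 (e7 4) (e7 2) = 0"
  apply (rule vec7_eqI) apply (unfold set17) by (auto simp: brc e7_inner)

lemma bb_4_3: "bracket7 (e7 4) (e7 3) = - e7 7"
  apply (rule vec7_eqI) apply (unfold set17) by (auto simp: brc e7_inner)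

lemma bb_4_4: "bracket7 (e7 4) (e7 4) = 0"
  apply (rule vec7_eqI) apply (unfold set17) by (auto simp: brc e7_inner)

lemma bb_4_5: "bracket7 (e7 4) (e7 5) = 0"
  apply (rule vec7_eqI) apply (unfold set17) by (auto simp: brc e7_inner)

lemma bb_4_6: "bracket7 (e7 4) (e7 6) = 0"
  apply (rule vec7_eqI) apply (unfold set17) by (auto simp: brc e7_inner)

lemma bb_4_7: "bracket7 (e7 4) (e7 7) = 0"
  apply (rule vec7_eqI) apply (unfold set17) by (auto simp: brc e7_inner)

lemma bb_5_1: "bracket7 (e7 5) (e7 1) = e7 7"
  apply (rule vec7_eqI) apply (unfold set17) by (auto simp: brc e7_inner)

lemma bb_5_2: "bracket7 (e7 5) (e7 2) = - e7 7"
  apply (rule vec7_eqI) apply (unfold set17) by (auto simp: brc e7_inner)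

lemma bb_5_3: "bracket7 (e7 5) (e7 3) = 0"
  apply (rule vec7_eqI) apply (unfold set17) by (auto simp: brc e7_inner)

lemma bb_5_4: "bracket7 (e7 5) (e7 4) = 0"
  apply (rule vec7_eqI) apply (unfold set17) by (auto simp: brc e7_inner)

lemma bb_5_5: "bracket7 (e7 5) (e7 5) = 0"
  apply (rule vec7_eqI) apply (unfold set17) by (auto simp: brc e7_inner)

lemma bb_5_6: "bracket7 (e7 5) (e7 6) = 0"
  apply (rule vec7_eqI) apply (unfold set17) by (auto simp: brc e7_inner)

lemma bb_5_7: "bracket7 (e7 5) (e7 7) = 0"
  apply (rule vec7_eqI) apply (unfold set17) by (auto simp: brc e7_inner)

lemma bb_6_1: "bracket7 (e7 6) (e7 1) = - e7 7"
  apply (rule vec7_eqI) apply (unfold set17) by (auto simp: brc e7_inner)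

lemma bb_6_2: "bracket7 (e7 6) (e7 2) = 0"
  apply (rule vec7_eqI) apply (unfold set17) by (auto simp: brc e7_inner)

lemma bb_6_3: "bracket7 (e7 6) (e7 3) = 0"
  apply (rule vec7_eqI) apply (unfold set17) by (auto simp: brc e7_inner)

lemma bb_6_4: "bracket7 (e7 6) (e7 4) = 0"
  apply (rule vec7_eqI) apply (unfold set17) by (auto simp: brc e7_inner)

lemma bb_6_5: "bracket7 (e7 6) (e7 5) = 0"
  apply (rule vec7_eqI) apply (unfold set17) by (auto simp: brc e7_inner)

lemma bb_6_6: "bracket7 (e7 6) (e7 6) = 0"
  apply (rule vec7_eqI) apply (unfold set17) by (auto simp: brc e7_inner)

lemma bb_6_7: "bracket7 (e7 6) (e7 7) = 0"
  apply (rule vec7_eqI) apply (unfold set17) by (auto simp: brc e7_inner)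

lemma bb_7_1: "bracket7 (e7 7) (e7 1) = 0"
  apply (rule vec7_eqI) apply (unfold set17) by (auto simp: brc e7_inner)

lemma bb_7_2: "bracket7 (e7 7) (e7 2) = 0"
  apply (rule vec7_eqI) apply (unfold set17) by (auto simp: brc e7_inner)

lemma bb_7_3: "bracket7 (e7 7) (e7 3) = 0"
  apply (rule vec7_eqI) apply (unfold set17) by (auto simp: brc e7_inner)

lemma bb_7_4: "bracket7 (e7 7) (e7 4) = 0"
  apply (rule vec7_eqI) apply (unfold set17) by (auto simp: brc e7_inner)

lemma bb_7_5: "bracket7 (e7 7) (e7 5) = 0"
  apply (rule vec7_eqI) apply (unfold set17) by (auto simp: brc e7_inner)

lemma bb_7_6: "bracket7 (e7 7) (e7 6) = 0"
  apply (rule vec7_eqI) apply (unfold set17) by (auto simp: brc e7_inner)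

lemma bb_7_7: "bracket7 (e7 7) (e7 7) = 0"
  apply (rule vec7_eqI) apply (unfold set17) by (auto simp: brc e7_inner)

lemmas bb = bb_1_1 bb_1_2 bb_1_3 bb_1_4 bb_1_5 bb_1_6 bb_1_7 bb_2_1 bb_2_2 bb_2_3 bb_2_4 bb_2_5 bb_2_6 bb_2_7 bb_3_1 bb_3_2 bb_3_3 bb_3_4 bb_3_5 bb_3_6 bb_3_7 bb_4_1 bb_4_2 bb_4_3 bb_4_4 bb_4_5 bb_4_6 bb_4_7 bb_5_1 bb_5_2 bb_5_3 bb_5_4 bb_5_5 bb_5_6 bb_5_7 bb_6_1 bb_6_2 bb_6_3 bb_6_4 bb_6_5 bb_6_6 bb_6_7 bb_7_1 bb_7_2 bb_7_3 bb_7_4 bb_7_5 bb_7_6 bb_7_7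




locale ipsp =
  fixes ip :: "real^7 \<Rightarrow> real^7 \<Rightarrow> real"
  assumes ipI: "is_inner_product ip"
begin

lemma bil_ip: "bilinear ip" using ipI unfolding is_inner_product_def by auto
lemma ip_sym: "ip x y = ip y x" using ipI unfolding is_inner_product_def by auto
lemma ip_pos: "x \<noteq> 0 \<Longrightarrow> ip x x > 0" using ipI unfolding is_inner_product_def by auto

lemma linL: "linear (\<lambda>x. ip x y)" using bil_ip unfolding bilinear_def by auto
lemma linR: "linear (\<lambda>y. ip x y)" using bil_ip unfolding bilinear_def by auto

lemma ip_addL: "ip (x + y) z = ip x z + ip y z" using linear_add[OF linL] by simp
lemma ip_addR: "ip z (x + y) = ip z x + ip z y" using linear_add[OF linR] by simp
lemma ip_scaleL: "ip (c *\<^sub>R x) z = c * ip x z" using linear_scale[OF linL] by simp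
lemma ip_scaleR: "ip z (c *\<^sub>R x) = c * ip z x" using linear_scale[OF linR] by simp
lemma ip_negL: "ip (- x) z = - ip x z" using linear_neg[OF linL] by simp
lemma ip_negR: "ip z (- x) = - ip z x" using linear_neg[OF linR] by simp
lemma ip_diffL: "ip (x - y) z = ip x z - ip y z" using linear_diff[OF linL] by simp
lemma ip_diffR: "ip z (x - y) = ip z x - ip z y" using linear_diff[OF linR] by simp
lemma ip_sumL: "ip (\<Sum>k\<in>S. f k) z = (\<Sum>k\<in>S. ip (f k) z)" using linear_sum[OF linL] by simp
lemma ip_sumR: "ip z (\<Sum>k\<in>S. f k) = (\<Sum>k\<in>S. ip z (f k))" using linear_sum[OF linR] by simp
lemma ip_zeroL: "ip 0 z = 0" using linear_0[OF linL] by simp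
lemma ip_zeroR: "ip z 0 = 0" using linear_0[OF linR] by simp

lemmas ip_simps = ip_addL ip_addR ip_scaleL ip_scaleR ip_negL ip_negR ip_diffL ip_diffR ip_zeroL ip_zeroR

lemma ip_ext: "(\<And>z. ip x z = ip y z) \<Longrightarrow> x = y"
proof -
  assume h: "\<And>z. ip x z = ip y z"
  have "ip (x - y) (x - y) = 0" using h[of "x - y"] by (simp add: ip_diffL)
  then show "x = y" using ip_pos[of "x - y"] by (cases "x - y = 0") auto
qed

end

definition Fs :: "nat \<Rightarrow> (real^7) set" where "Fs k = {v. \<forall>j. 1 \<le> j \<and> j < k \<longrightarrow> v \<bullet> e7 j = 0}"

lemma Fs_sum: "(\<And>m. m \<in> A \<Longrightarrow> f m \<in> Fs k) \<Longrightarrow> (\<Sum>m\<in>A. f m) \<in> Fs k"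
  unfolding Fs_def by (auto simp: inner_sum_left)
lemma Fs_scale: "v \<in> Fs k \<Longrightarrow> c *\<^sub>R v \<in> Fs k"
  unfolding Fs_def by auto
lemma Fs_diff: "v \<in> Fs k \<Longrightarrow> w \<in> Fs k \<Longrightarrow> v - w \<in> Fs k"
  unfolding Fs_def by (auto simp: inner_diff_left)
lemma Fs_mono: "k \<le> k' \<Longrightarrow> v \<in> Fs k' \<Longrightarrow> v \<in> Fs k"
  unfolding Fs_def by auto
lemma e7_Fs: "k \<in> {1..7} \<Longrightarrow> e7 k \<in> Fs k"
  unfolding Fs_def by (auto simp: e7_inner)

context ipsp begin

definition GSP where
  "GSP s u \<longleftrightarrow> (\<forall>i\<in>{s..7}. \<forall>j\<in>{s..7}. ip (u i) (u j) = (if i = j then 1 else 0)) \<and>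
     (\<forall>k\<in>{s..7}. u k \<in> Fs k \<and> e7 k = (\<Sum>m\<in>{k..7}. ip (e7 k) (u m) *\<^sub>R u m) \<and> ip (e7 k) (u k) > 0)"

lemma GS_step:
  assumes s1: "1 \<le> s" and s7: "s \<le> 7" and P: "GSP (Suc s) u"
  shows "\<exists>u'. GSP s u'"
proof -
  have orthP: "\<And>i j. i \<in> {Suc s..7} \<Longrightarrow> j \<in> {Suc s..7} \<Longrightarrow> ip (u i) (u j) = (if i = j then 1 else 0)"
    and FP: "\<And>k. k \<in> {Suc s..7} \<Longrightarrow> u k \<in> Fs k"
    and EP: "\<And>k. k \<in> {Suc s..7} \<Longrightarrow> e7 k = (\<Sum>m\<in>{k..7}. ip (e7 k) (u m) *\<^sub>R u m)"
    and PP: "\<And>k. k \<in> {Suc s..7} \<Longrightarrow> ip (e7 k) (u k) > 0"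
    using P unfolding GSP_def by auto
  define S where "S = (\<Sum>m\<in>{Suc s..7}. ip (e7 s) (u m) *\<^sub>R u m)"
  define w where "w = e7 s - S"
  have SF: "S \<in> Fs (Suc s)" unfolding S_def
    by (rule Fs_sum, rule Fs_scale) (auto intro: Fs_mono[OF _ FP])
  have sin: "s \<in> {1..7}" using s1 s7 by auto
  have "S \<bullet> e7 s = 0" using SF s1 unfolding Fs_def by auto
  then have we: "w \<bullet> e7 s = 1" unfolding w_def using sin by (simp add: inner_diff_left e7_inner)
  then have wnz: "w \<noteq> 0" by auto
  define n where "n = sqrt (ip w w)"
  have ww: "ip w w > 0" using ip_pos[OF wnz] .
  have npos: "n > 0" unfolding n_def using ww by simp
  have nsq: "n * n = ip w w" unfolding n_def using ww by (simp add: real_sqrt_mult[symmetric])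
  define v where "v = (1 / n) *\<^sub>R w"
  have wperp: "ip w (u m) = 0" if m: "m \<in> {Suc s..7}" for m
  proof -
    have "ip S (u m) = (\<Sum>m'\<in>{Suc s..7}. (if m' = m then ip (e7 s) (u m') else 0))"
      unfolding S_def ip_sumL ip_scaleL using m by (intro sum.cong refl) (simp add: orthP)
    also have "\<dots> = ip (e7 s) (u m)" using m by (simp add: sum.delta')
    finally show ?thesis unfolding w_def by (simp add: ip_diffL)
  qed
  have vperp: "ip v (u m) = 0" if "m \<in> {Suc s..7}" for m
    unfolding v_def using wperp[OF that] by (simp add: ip_scaleL)
  have vv: "ip v v = 1" unfolding v_def using nsq npos ww by (simp add: ip_scaleL ip_scaleR)
  have vF: "v \<in> Fs s" unfolding v_def w_def
    by (intro Fs_scale Fs_diff e7_Fs[OF sin] Fs_mono[OF _ SF]) simp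
  have Sv: "ip S v = 0"
    unfolding S_def ip_sumL ip_scaleL using vperp by (simp add: ip_sym)
  have ev: "ip (e7 s) v = n"
  proof -
    have "e7 s = w + S" unfolding w_def by simp
    then have "ip (e7 s) v = ip w v + ip S v" by (simp add: ip_addL)
    also have "ip w v = ip w w / n" unfolding v_def by (simp add: ip_scaleR)
    also have "\<dots> = n" using nsq npos by (simp add: field_simps)
    finally show ?thesis using Sv by simp
  qed
  have nv: "n *\<^sub>R v = w" unfolding v_def using npos by simp
  define u' where "u' = u(s := v)"
  have "GSP s u'"
    unfolding GSP_def
  proof (intro conjI ballI)
    fix i j assume i: "i \<in> {s..7}" and j: "j \<in> {s..7}"
    show "ip (u' i) (u' j) = (if i = j then 1 else 0)"
    proof (cases "i = s"; cases "j = s")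
      assume "i = s" "j = s" then show ?thesis using vv by (simp add: u'_def)
    next
      assume "i = s" "j \<noteq> s" then show ?thesis using vperp[of j] j by (simp add: u'_def)
    next
      assume "i \<noteq> s" "j = s" then show ?thesis using vperp[of i] i by (simp add: u'_def ip_sym)
    next
      assume "i \<noteq> s" "j \<noteq> s" then show ?thesis using orthP[of i j] i j by (simp add: u'_def)
    qed
  next
    fix k assume k: "k \<in> {s..7}"
    show "u' k \<in> Fs k"
      using k vF FP[of k] by (cases "k = s") (auto simp: u'_def)
    show "ip (e7 k) (u' k) > 0"
      using k ev npos PP[of k] by (cases "k = s") (auto simp: u'_def)
    show "e7 k = (\<Sum>m\<in>{k..7}. ip (e7 k) (u' m) *\<^sub>R u' m)"
    proof (cases "k = s")
      case True
      have split: "{s..7} = insert s {Suc s..7}" using s7 by auto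
      have "(\<Sum>m\<in>{k..7}. ip (e7 k) (u' m) *\<^sub>R u' m) = ip (e7 s) v *\<^sub>R v + (\<Sum>m\<in>{Suc s..7}. ip (e7 s) (u' m) *\<^sub>R u' m)"
        unfolding True split by (simp add: u'_def)
      also have "(\<Sum>m\<in>{Suc s..7}. ip (e7 s) (u' m) *\<^sub>R u' m) = S"
        unfolding S_def by (intro sum.cong refl) (simp add: u'_def)
      finally show ?thesis using ev nv unfolding True w_def by simp
    next
      case False
      then have k': "k \<in> {Suc s..7}" using k by auto
      have "(\<Sum>m\<in>{k..7}. ip (e7 k) (u' m) *\<^sub>R u' m) = (\<Sum>m\<in>{k..7}. ip (e7 k) (u m) *\<^sub>R u m)"
        using k' by (intro sum.cong refl) (auto simp: u'_def)
      then show ?thesis using EP[OF k'] by simp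
    qed
  qed
  then show ?thesis by blast
qed

lemma GS_exists: "\<exists>u. GSP 1 u"
proof -
  have "n \<le> 7 \<Longrightarrow> \<exists>u. GSP (8 - n) u" for n
  proof (induction n)
    case 0
    show ?case by (rule exI[of _ "\<lambda>_. 0"]) (simp add: GSP_def)
  next
    case (Suc n)
    then obtain u where "GSP (8 - n) u" by auto
    moreover have "8 - n = Suc (7 - n)" using Suc.prems by simp
    ultimately have G: "GSP (Suc (7 - n)) u" by simp
    have "\<exists>u'. GSP (7 - n) u'" by (rule GS_step[OF _ _ G]) (use Suc.prems in auto)
    moreover have "8 - Suc n = 7 - n" by simp
    ultimately show ?case by simp
  qed
  from this[of 7] show ?thesis by simp
qed

end




locale ons = ipsp +
  fixes B :: "real^7 \<Rightarrow> real^7 \<Rightarrow> real^7" and u :: "nat \<Rightarrow> real^7"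
  assumes bilB: "bilinear B" and antiB: "\<And>x y. B x y = - B y x"
    and orth: "\<And>i j. i \<in> {1..7} \<Longrightarrow> j \<in> {1..7} \<Longrightarrow> ip (u i) (u j) = (if i = j then 1 else 0)"
    and expand: "\<And>v. v = (\<Sum>k\<in>{1..7}. ip v (u k) *\<^sub>R u k)"
begin

lemma linBL: "linear (\<lambda>x. B x y)" using bilB unfolding bilinear_def by auto
lemma linBR: "linear (\<lambda>y. B x y)" using bilB unfolding bilinear_def by auto


lemma B_addL: "B (x + y) z = B x z + B y z" using linear_add[OF linBL] by simp
lemma B_addR: "B z (x + y) = B z x + B z y" using linear_add[OF linBR] by simp
lemma B_scaleL: "B (c *\<^sub>R x) z = c *\<^sub>R B x z" using linear_scale[OF linBL] by simp
lemma B_scaleR: "B z (c *\<^sub>R x) = c *\<^sub>R B z x" using linear_scale[OF linBR] by simp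
lemma B_sumL: "B (\<Sum>k\<in>S. f k) z = (\<Sum>k\<in>S. B (f k) z)" using linear_sum[OF linBL] by simp


lemma expand_ip: "ip v w = (\<Sum>k\<in>{1..7}. ip v (u k) * ip w (u k))"
proof -
  have "ip v w = ip (\<Sum>k\<in>{1..7}. ip v (u k) *\<^sub>R u k) w" using expand[of v] by simp
  also have "\<dots> = (\<Sum>k\<in>{1..7}. ip v (u k) * ip w (u k))"
    by (simp only: ip_sumL ip_scaleL) (simp add: ip_sym)
  finally show ?thesis .
qed

definition K where "K X Y Z = (ip (B X Y) Z - ip (B Y Z) X + ip (B Z X) Y) / 2"

lemma K_linZ: "linear (\<lambda>Z. K X Y Z)"
  unfolding linear_iff K_def
  by (auto simp: ip_simps B_addL B_addR B_scaleL B_scaleR field_simps)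
lemma K_linX: "linear (\<lambda>X. K X Y Z)"
  unfolding linear_iff K_def
  by (auto simp: ip_simps B_addL B_addR B_scaleL B_scaleR field_simps)
lemma K_linY: "linear (\<lambda>Y. K X Y Z)"
  unfolding linear_iff K_def
  by (auto simp: ip_simps B_addL B_addR B_scaleL B_scaleR field_simps)

lemma nabla: "ip (levi_civita B ip X Y) Z = K X Y Z"
proof -
  define W where "W = (\<Sum>k\<in>{1..7}. K X Y (u k) *\<^sub>R u k)"
  have W: "ip W Z = K X Y Z" for Z
  proof -
    have "ip W Z = (\<Sum>k\<in>{1..7}. K X Y (u k) * ip Z (u k))"
      unfolding W_def by (simp only: ip_sumL ip_scaleL) (simp add: ip_sym)
    also have "\<dots> = K X Y (\<Sum>k\<in>{1..7}. ip Z (u k) *\<^sub>R u k)"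
      by (simp add: linear_sum[OF K_linZ] linear_scale[OF K_linZ] mult.commute)
    also have "\<dots> = K X Y Z" using expand[of Z] by simp
    finally show ?thesis .
  qed
  have "levi_civita B ip X Y = W"
    unfolding levi_civita_def
  proof (rule the_equality)
    show "\<forall>Z. ip W Z = (ip (B X Y) Z - ip (B Y Z) X + ip (B Z X) Y) / 2"
      using W unfolding K_def by simp
    fix W' assume "\<forall>Z. ip W' Z = (ip (B X Y) Z - ip (B Y Z) X + ip (B Z X) Y) / 2"
    then show "W' = W" using W unfolding K_def by (intro ip_ext) (metis (no_types))
  qed
  then show ?thesis using W by simp
qed

abbreviation nab where "nab X Y \<equiv> levi_civita B ip X Y"

lemma nab_addX: "nab (X + X') Y = nab X Y + nab X' Y"
  by (rule ip_ext) (simp add: nabla ip_addL linear_add[OF K_linX])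
lemma nab_scaleX: "nab (c *\<^sub>R X) Y = c *\<^sub>R nab X Y"
  by (rule ip_ext) (simp add: nabla ip_scaleL linear_scale[OF K_linX])
lemma nab_addY: "nab X (Y + Y') = nab X Y + nab X Y'"
  by (rule ip_ext) (simp add: nabla ip_addL linear_add[OF K_linY])
lemma nab_scaleY: "nab X (c *\<^sub>R Y) = c *\<^sub>R nab X Y"
  by (rule ip_ext) (simp add: nabla ip_scaleL linear_scale[OF K_linY])
lemma nab_negY: "nab X (- Y) = - nab X Y"
  using nab_scaleY[of X "-1" Y] by simp

lemma metric: "ip (nab X V) W = - ip (nab X W) V"
  unfolding nabla K_def
  using antiB[of V X] antiB[of W V] antiB[of X W]
  by (simp add: ip_simps field_simps)

lemma curv: "ip (curvature B ip X Y Z) W =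
   - ip (nab Y Z) (nab X W) + ip (nab X Z) (nab Y W) - K (B X Y) Z W"
proof -
  have "ip (curvature B ip X Y Z) W = ip (nab X (nab Y Z)) W - ip (nab Y (nab X Z)) W - ip (nab (B X Y) Z) W"
    by (simp add: curvature_def ip_diffL)
  then show ?thesis
    by (simp only: metric[of X "nab Y Z"] metric[of Y "nab X Z"] nabla[of "B X Y"])
       (simp add: ip_sym[of "nab X W" "nab Y Z"] ip_sym[of "nab Y W" "nab X Z"])
qed

lemma curv_lin: "linear (\<lambda>X. curvature B ip X Y Z)"
  unfolding linear_iff curvature_def
  by (simp add: nab_addX nab_scaleX nab_addY nab_scaleY B_addL B_scaleL algebra_simps
       scaleR_diff_right)

lemma trace: assumes "linear L"
  shows "(\<Sum>i\<in>UNIV. L (axis i 1) $ i) = (\<Sum>k\<in>{1..7}. ip (L (u k)) (u k))"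
proof -
  have "(\<Sum>i\<in>UNIV. L (axis i 1) $ i) =
      (\<Sum>i\<in>UNIV. \<Sum>k\<in>{1..7}. ip (axis i 1) (u k) * (L (u k) $ i))"
  proof (rule sum.cong[OF refl])
    fix i :: 7
    have "L (axis i 1) = L (\<Sum>k\<in>{1..7}. ip (axis i 1) (u k) *\<^sub>R u k)" using expand[of "axis i 1"] by simp
    also have "\<dots> = (\<Sum>k\<in>{1..7}. ip (axis i 1) (u k) *\<^sub>R L (u k))"
      by (simp add: linear_sum[OF assms] linear_scale[OF assms])
    finally show "L (axis i 1) $ i = (\<Sum>k\<in>{1..7}. ip (axis i 1) (u k) * (L (u k) $ i))"
      by (simp add: sum_component)
  qed
  also have "\<dots> = (\<Sum>k\<in>{1..7}. \<Sum>i\<in>UNIV. ip (axis i 1) (u k) * (L (u k) $ i))"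
    by (rule sum.swap)
  also have "\<dots> = (\<Sum>k\<in>{1..7}. ip (\<Sum>i\<in>UNIV. (L (u k) $ i) *\<^sub>R axis i 1) (u k))"
    by (simp add: ip_sumL ip_scaleL mult.commute)
  also have "\<dots> = (\<Sum>k\<in>{1..7}. ip (L (u k)) (u k))"
  proof -
    have "(\<Sum>i\<in>UNIV. x $ i *\<^sub>R axis i 1) = x" for x :: "real^7"
      using basis_expansion[of x] by (simp add: scalar_mult_eq_scaleR)
    then show ?thesis by simp
  qed
  finally show ?thesis .
qed

lemma ricci_basis: "ricci B ip Y Z = (\<Sum>k\<in>{1..7}. ip (curvature B ip (u k) Y Z) (u k))"
  unfolding ricci_def using trace[OF curv_lin[of Y Z]] by simp

definition C where "C p q r = ip (B (u p) (u q)) (u r)"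
definition G where "G p q r = K (u p) (u q) (u r)"

lemma G_C: "G p q r = (C p q r - C q r p + C r p q) / 2"
  unfolding G_def K_def C_def by simp

lemma ric_uv: "ricci B ip (u a) (u b) =
  (\<Sum>i\<in>{1..7}. \<Sum>m\<in>{1..7}. - G a b m * G i i m + G i b m * G a i m - C i a m * G m b i)"
proof -
  have "ip (curvature B ip (u i) (u a) (u b)) (u i) =
     (\<Sum>m\<in>{1..7}. - G a b m * G i i m + G i b m * G a i m - C i a m * G m b i)" for i
  proof -
    have e1: "ip (nab (u a) (u b)) (nab (u i) (u i)) = (\<Sum>m\<in>{1..7}. G a b m * G i i m)"
      by (subst expand_ip) (simp add: nabla G_def)
    have e2: "ip (nab (u i) (u b)) (nab (u a) (u i)) = (\<Sum>m\<in>{1..7}. G i b m * G a i m)"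
      by (subst expand_ip) (simp add: nabla G_def)
    have e3: "K (B (u i) (u a)) (u b) (u i) = (\<Sum>m\<in>{1..7}. C i a m * G m b i)"
    proof -
      have "K (B (u i) (u a)) (u b) (u i) = K (\<Sum>m\<in>{1..7}. C i a m *\<^sub>R u m) (u b) (u i)"
        using expand[of "B (u i) (u a)"] unfolding C_def by simp
      also have "\<dots> = (\<Sum>m\<in>{1..7}. C i a m * G m b i)"
        by (simp add: linear_sum[OF K_linX] linear_scale[OF K_linX] G_def)
      finally show ?thesis .
    qed
    show ?thesis unfolding curv e1 e2 e3
      by (simp add: sum_subtractf sum.distrib sum_negf)
  qed
  then show ?thesis unfolding ricci_basis by simp
qed

end




lemma ric_alg:
  fixes C :: "nat \<Rightarrow> nat \<Rightarrow> nat \<Rightarrow> real" and S :: "nat set"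
  assumes anti: "\<And>p q r. C p q r = - C q p r"
    and tri: "\<And>p q r. p \<in> S \<Longrightarrow> q \<in> S \<Longrightarrow> r \<in> S \<Longrightarrow> C p q r \<noteq> 0 \<Longrightarrow> p < r \<and> q < r"
    and a: "a \<in> S" and b: "b \<in> S"
    and Gdef: "\<And>p q r. G p q r = (C p q r - C q r p + C r p q) / 2"
  shows "(\<Sum>i\<in>S. \<Sum>m\<in>S. - G a b m * G i i m + G i b m * G a i m - C i a m * G m b i)
       = (\<Sum>i\<in>S. \<Sum>m\<in>S. C m i a * C m i b / 4 - C i a m * C i b m / 2)"
proof -
  define h where "h i m = (C i b m * C a i m + C i b m * C m i a - C m i b * C a i m) / 4" for i m
  have pt: "- G a b m * G i i m + G i b m * G a i m - C i a m * G m b i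
      = C m i a * C m i b / 4 - C i a m * C i b m / 2 + (h i m - h m i)" if i: "i \<in> S" and m: "m \<in> S" for i m
  proof -
    have z0: "C x x z = 0" for x z using anti[of x x z] by simp
    have z1: "C i m i = 0" using tri[OF i m i] by auto
    have z2: "C a m i = 0 \<or> C b i m = 0" using tri[OF a m i] tri[OF b i m] by (metis less_asym)
    have z3: "C a i m = 0 \<or> C b m i = 0" using tri[OF a i m] tri[OF b m i] by (metis less_asym)
    have rules:
      "C b a z = - C a b z" "C i a z = - C a i z" "C m a z = - C a m z"
      "C i b z = - C b i z" "C m b z = - C b m z" "C m i z = - C i m z" for z
      by (rule anti)+
    from z2 z3 show ?thesis
      unfolding Gdef h_def
      apply (elim disjE) apply (simp_all only: rules z0 z1) apply (simp_all add: field_simps) apply ((simp_all add: algebra_simps)?) done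
  qed
  have "(\<Sum>i\<in>S. \<Sum>m\<in>S. - G a b m * G i i m + G i b m * G a i m - C i a m * G m b i)
     = (\<Sum>i\<in>S. \<Sum>m\<in>S. C m i a * C m i b / 4 - C i a m * C i b m / 2 + (h i m - h m i))"
    by (intro sum.cong refl) (simp only: pt)
  also have "\<dots> = (\<Sum>i\<in>S. \<Sum>m\<in>S. C m i a * C m i b / 4 - C i a m * C i b m / 2)
      + ((\<Sum>i\<in>S. \<Sum>m\<in>S. h i m) - (\<Sum>i\<in>S. \<Sum>m\<in>S. h m i))"
    by (simp add: sum.distrib sum_subtractf)
  also have "(\<Sum>i\<in>S. \<Sum>m\<in>S. h m i) = (\<Sum>i\<in>S. \<Sum>m\<in>S. h i m)"
    by (rule sum.swap)
  finally show ?thesis by simp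
qed

lemma sw12: "(\<Sum>p\<in>S. \<Sum>q\<in>S. \<Sum>r\<in>S. f p q r) = (\<Sum>p\<in>S. \<Sum>q\<in>S. \<Sum>r\<in>S. f q p r)"
  by (rule sum.swap)
lemma sw23: "(\<Sum>p\<in>S. \<Sum>q\<in>S. \<Sum>r\<in>S. f p q r) = (\<Sum>p\<in>S. \<Sum>q\<in>S. \<Sum>r\<in>S. f p r q)"
  by (rule sum.cong[OF refl]) (rule sum.swap)

lemma trace_w:
  fixes C :: "nat \<Rightarrow> nat \<Rightarrow> nat \<Rightarrow> real" and S :: "nat set" and w :: "nat \<Rightarrow> real"
  assumes anti: "\<And>p q r. C p q r = - C q p r"
  shows "(\<Sum>j\<in>S. w j * (\<Sum>i\<in>S. \<Sum>m\<in>S. C m i j * C m i j / 4 - C i j m * C i j m / 2))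
     = (\<Sum>p\<in>S. \<Sum>q\<in>S. \<Sum>r\<in>S. (C p q r)^2 * (w r - w p - w q) / 4)"
proof -
  have L: "(\<Sum>j\<in>S. w j * (\<Sum>i\<in>S. \<Sum>m\<in>S. C m i j * C m i j / 4 - C i j m * C i j m / 2))
     = (\<Sum>j\<in>S. \<Sum>i\<in>S. \<Sum>m\<in>S. w j * (C m i j)^2 / 4) - (\<Sum>j\<in>S. \<Sum>i\<in>S. \<Sum>m\<in>S. w j * (C i j m)^2 / 2)"
    by (simp add: sum_distrib_left sum_subtractf power2_eq_square algebra_simps)
  have A: "(\<Sum>j\<in>S. \<Sum>i\<in>S. \<Sum>m\<in>S. w j * (C m i j)^2 / 4) = (\<Sum>p\<in>S. \<Sum>q\<in>S. \<Sum>r\<in>S. w r * (C p q r)^2 / 4)"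
    (is "?l = ?r")
  proof -
    have "?l = (\<Sum>j\<in>S. \<Sum>m\<in>S. \<Sum>i\<in>S. w j * (C m i j)^2 / 4)" by (rule sw23)
    also have "\<dots> = (\<Sum>m\<in>S. \<Sum>j\<in>S. \<Sum>i\<in>S. w j * (C m i j)^2 / 4)" by (rule sw12)
    also have "\<dots> = ?r" by (rule sw23)
    finally show ?thesis .
  qed
  have Bq: "(\<Sum>j\<in>S. \<Sum>i\<in>S. \<Sum>m\<in>S. w j * (C i j m)^2 / 2) = (\<Sum>p\<in>S. \<Sum>q\<in>S. \<Sum>r\<in>S. w q * (C p q r)^2 / 2)"
    by (rule sw12)
  have Bp: "(\<Sum>p\<in>S. \<Sum>q\<in>S. \<Sum>r\<in>S. w q * (C p q r)^2 / 2) = (\<Sum>p\<in>S. \<Sum>q\<in>S. \<Sum>r\<in>S. w p * (C p q r)^2 / 2)"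
  proof -
    have "(\<Sum>p\<in>S. \<Sum>q\<in>S. \<Sum>r\<in>S. w q * (C p q r)^2 / 2) = (\<Sum>p\<in>S. \<Sum>q\<in>S. \<Sum>r\<in>S. w p * (C q p r)^2 / 2)"
      by (rule sw12)
    also have "\<dots> = (\<Sum>p\<in>S. \<Sum>q\<in>S. \<Sum>r\<in>S. w p * (C p q r)^2 / 2)"
    proof (intro sum.cong refl)
      fix p q r show "w p * (C q p r)^2 / 2 = w p * (C p q r)^2 / 2" using anti[of q p r] by simp
    qed
    finally show ?thesis .
  qed
  have "(\<Sum>j\<in>S. \<Sum>i\<in>S. \<Sum>m\<in>S. w j * (C i j m)^2 / 2) = (\<Sum>p\<in>S. \<Sum>q\<in>S. \<Sum>r\<in>S. (w p + w q) * (C p q r)^2 / 4)"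
  proof -
    have "(\<Sum>p\<in>S. \<Sum>q\<in>S. \<Sum>r\<in>S. (w p + w q) * (C p q r)^2 / 4)
       = (\<Sum>p\<in>S. \<Sum>q\<in>S. \<Sum>r\<in>S. w p * (C p q r)^2 / 2) / 2 + (\<Sum>p\<in>S. \<Sum>q\<in>S. \<Sum>r\<in>S. w q * (C p q r)^2 / 2) / 2"
      by (simp add: sum_divide_distrib sum.distrib algebra_simps add_divide_distrib)
    then show ?thesis using Bq Bp by simp
  qed
  then show ?thesis unfolding L A
    by (simp add: sum_subtractf[symmetric] algebra_simps diff_divide_distrib)
qed

lemma sum3_pos:
  fixes f :: "nat \<Rightarrow> nat \<Rightarrow> nat \<Rightarrow> real"
  assumes fin: "finite S" and nn: "\<And>p q r. p \<in> S \<Longrightarrow> q \<in> S \<Longrightarrow> r \<in> S \<Longrightarrow> f p q r \<ge> 0"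
    and x: "x \<in> S" and y: "y \<in> S" and z: "z \<in> S" and pos: "f x y z > 0"
  shows "(\<Sum>p\<in>S. \<Sum>q\<in>S. \<Sum>r\<in>S. f p q r) > 0"
proof -
  have "f x y z \<le> (\<Sum>r\<in>S. f x y r)" using fin z nn x y by (intro member_le_sum) auto
  also have "\<dots> \<le> (\<Sum>q\<in>S. \<Sum>r\<in>S. f x q r)"
    using fin y nn x by (intro member_le_sum[of y S "\<lambda>q. \<Sum>r\<in>S. f x q r"]) (auto intro: sum_nonneg)
  also have "\<dots> \<le> (\<Sum>p\<in>S. \<Sum>q\<in>S. \<Sum>r\<in>S. f p q r)"
    using fin x nn by (intro member_le_sum[of x S "\<lambda>p. \<Sum>q\<in>S. \<Sum>r\<in>S. f p q r"]) (auto intro!: sum_nonneg)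
  finally show ?thesis using pos by simp
qed




lemma der_struct:
  assumes dD: "is_derivation bracket7 D"
  shows "\<exists>t. \<forall>j\<in>{1..7}. (\<forall>k\<in>{1..7}. k < j \<longrightarrow> D (e7 j) \<bullet> e7 k = 0) \<and> D (e7 j) \<bullet> e7 j = t * real ((j+1) div 2)"
proof -
  have lin: "linear D" and der: "\<And>x y. D (bracket7 x y) = bracket7 (D x) y + bracket7 x (D y)"
    using dD unfolding is_derivation_def by auto
  have "D (bracket7 (e7 1) (e7 2)) \<bullet> e7 1 = bracket7 (D (e7 1)) (e7 2) \<bullet> e7 1 + bracket7 (e7 1) (D (e7 2)) \<bullet> e7 1"
    using der by (simp add: inner_add_left)
  note q_1_2_1 = this[simplified bb brc1 brc2 brc3 brc4 brc5 brc6 brc7 e7n linear_neg[OF lin] linear_0[OF lin] inner_minus_left inner_zero_left, simplified]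
  have "D (bracket7 (e7 1) (e7 2)) \<bullet> e7 2 = bracket7 (D (e7 1)) (e7 2) \<bullet> e7 2 + bracket7 (e7 1) (D (e7 2)) \<bullet> e7 2"
    using der by (simp add: inner_add_left)
  note q_1_2_2 = this[simplified bb brc1 brc2 brc3 brc4 brc5 brc6 brc7 e7n linear_neg[OF lin] linear_0[OF lin] inner_minus_left inner_zero_left, simplified]
  have "D (bracket7 (e7 1) (e7 2)) \<bullet> e7 3 = bracket7 (D (e7 1)) (e7 2) \<bullet> e7 3 + bracket7 (e7 1) (D (e7 2)) \<bullet> e7 3"
    using der by (simp add: inner_add_left)
  note q_1_2_3 = this[simplified bb brc1 brc2 brc3 brc4 brc5 brc6 brc7 e7n linear_neg[OF lin] linear_0[OF lin] inner_minus_left inner_zero_left, simplified]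
  have "D (bracket7 (e7 1) (e7 2)) \<bullet> e7 4 = bracket7 (D (e7 1)) (e7 2) \<bullet> e7 4 + bracket7 (e7 1) (D (e7 2)) \<bullet> e7 4"
    using der by (simp add: inner_add_left)
  note q_1_2_4 = this[simplified bb brc1 brc2 brc3 brc4 brc5 brc6 brc7 e7n linear_neg[OF lin] linear_0[OF lin] inner_minus_left inner_zero_left, simplified]
  have "D (bracket7 (e7 1) (e7 2)) \<bullet> e7 5 = bracket7 (D (e7 1)) (e7 2) \<bullet> e7 5 + bracket7 (e7 1) (D (e7 2)) \<bullet> e7 5"
    using der by (simp add: inner_add_left)
  note q_1_2_5 = this[simplified bb brc1 brc2 brc3 brc4 brc5 brc6 brc7 e7n linear_neg[OF lin] linear_0[OF lin] inner_minus_left inner_zero_left, simplified]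
  have "D (bracket7 (e7 1) (e7 2)) \<bullet> e7 6 = bracket7 (D (e7 1)) (e7 2) \<bullet> e7 6 + bracket7 (e7 1) (D (e7 2)) \<bullet> e7 6"
    using der by (simp add: inner_add_left)
  note q_1_2_6 = this[simplified bb brc1 brc2 brc3 brc4 brc5 brc6 brc7 e7n linear_neg[OF lin] linear_0[OF lin] inner_minus_left inner_zero_left, simplified]
  have "D (bracket7 (e7 1) (e7 2)) \<bullet> e7 7 = bracket7 (D (e7 1)) (e7 2) \<bullet> e7 7 + bracket7 (e7 1) (D (e7 2)) \<bullet> e7 7"
    using der by (simp add: inner_add_left)
  note q_1_2_7 = this[simplified bb brc1 brc2 brc3 brc4 brc5 brc6 brc7 e7n linear_neg[OF lin] linear_0[OF lin] inner_minus_left inner_zero_left, simplified]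
  have "D (bracket7 (e7 1) (e7 3)) \<bullet> e7 4 = bracket7 (D (e7 1)) (e7 3) \<bullet> e7 4 + bracket7 (e7 1) (D (e7 3)) \<bullet> e7 4"
    using der by (simp add: inner_add_left)
  note q_1_3_4 = this[simplified bb brc1 brc2 brc3 brc4 brc5 brc6 brc7 e7n linear_neg[OF lin] linear_0[OF lin] inner_minus_left inner_zero_left, simplified]
  have "D (bracket7 (e7 1) (e7 3)) \<bullet> e7 5 = bracket7 (D (e7 1)) (e7 3) \<bullet> e7 5 + bracket7 (e7 1) (D (e7 3)) \<bullet> e7 5"
    using der by (simp add: inner_add_left)
  note q_1_3_5 = this[simplified bb brc1 brc2 brc3 brc4 brc5 brc6 brc7 e7n linear_neg[OF lin] linear_0[OF lin] inner_minus_left inner_zero_left, simplified]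
  have "D (bracket7 (e7 1) (e7 3)) \<bullet> e7 6 = bracket7 (D (e7 1)) (e7 3) \<bullet> e7 6 + bracket7 (e7 1) (D (e7 3)) \<bullet> e7 6"
    using der by (simp add: inner_add_left)
  note q_1_3_6 = this[simplified bb brc1 brc2 brc3 brc4 brc5 brc6 brc7 e7n linear_neg[OF lin] linear_0[OF lin] inner_minus_left inner_zero_left, simplified]
  have "D (bracket7 (e7 1) (e7 3)) \<bullet> e7 7 = bracket7 (D (e7 1)) (e7 3) \<bullet> e7 7 + bracket7 (e7 1) (D (e7 3)) \<bullet> e7 7"
    using der by (simp add: inner_add_left)
  note q_1_3_7 = this[simplified bb brc1 brc2 brc3 brc4 brc5 brc6 brc7 e7n linear_neg[OF lin] linear_0[OF lin] inner_minus_left inner_zero_left, simplified]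
  have "D (bracket7 (e7 1) (e7 4)) \<bullet> e7 1 = bracket7 (D (e7 1)) (e7 4) \<bullet> e7 1 + bracket7 (e7 1) (D (e7 4)) \<bullet> e7 1"
    using der by (simp add: inner_add_left)
  note q_1_4_1 = this[simplified bb brc1 brc2 brc3 brc4 brc5 brc6 brc7 e7n linear_neg[OF lin] linear_0[OF lin] inner_minus_left inner_zero_left, simplified]
  have "D (bracket7 (e7 1) (e7 4)) \<bullet> e7 2 = bracket7 (D (e7 1)) (e7 4) \<bullet> e7 2 + bracket7 (e7 1) (D (e7 4)) \<bullet> e7 2"
    using der by (simp add: inner_add_left)
  note q_1_4_2 = this[simplified bb brc1 brc2 brc3 brc4 brc5 brc6 brc7 e7n linear_neg[OF lin] linear_0[OF lin] inner_minus_left inner_zero_left, simplified]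
  have "D (bracket7 (e7 1) (e7 4)) \<bullet> e7 3 = bracket7 (D (e7 1)) (e7 4) \<bullet> e7 3 + bracket7 (e7 1) (D (e7 4)) \<bullet> e7 3"
    using der by (simp add: inner_add_left)
  note q_1_4_3 = this[simplified bb brc1 brc2 brc3 brc4 brc5 brc6 brc7 e7n linear_neg[OF lin] linear_0[OF lin] inner_minus_left inner_zero_left, simplified]
  have "D (bracket7 (e7 1) (e7 4)) \<bullet> e7 4 = bracket7 (D (e7 1)) (e7 4) \<bullet> e7 4 + bracket7 (e7 1) (D (e7 4)) \<bullet> e7 4"
    using der by (simp add: inner_add_left)
  note q_1_4_4 = this[simplified bb brc1 brc2 brc3 brc4 brc5 brc6 brc7 e7n linear_neg[OF lin] linear_0[OF lin] inner_minus_left inner_zero_left, simplified]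
  have "D (bracket7 (e7 1) (e7 4)) \<bullet> e7 5 = bracket7 (D (e7 1)) (e7 4) \<bullet> e7 5 + bracket7 (e7 1) (D (e7 4)) \<bullet> e7 5"
    using der by (simp add: inner_add_left)
  note q_1_4_5 = this[simplified bb brc1 brc2 brc3 brc4 brc5 brc6 brc7 e7n linear_neg[OF lin] linear_0[OF lin] inner_minus_left inner_zero_left, simplified]
  have "D (bracket7 (e7 1) (e7 4)) \<bullet> e7 6 = bracket7 (D (e7 1)) (e7 4) \<bullet> e7 6 + bracket7 (e7 1) (D (e7 4)) \<bullet> e7 6"
    using der by (simp add: inner_add_left)
  note q_1_4_6 = this[simplified bb brc1 brc2 brc3 brc4 brc5 brc6 brc7 e7n linear_neg[OF lin] linear_0[OF lin] inner_minus_left inner_zero_left, simplified]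
  have "D (bracket7 (e7 1) (e7 4)) \<bullet> e7 7 = bracket7 (D (e7 1)) (e7 4) \<bullet> e7 7 + bracket7 (e7 1) (D (e7 4)) \<bullet> e7 7"
    using der by (simp add: inner_add_left)
  note q_1_4_7 = this[simplified bb brc1 brc2 brc3 brc4 brc5 brc6 brc7 e7n linear_neg[OF lin] linear_0[OF lin] inner_minus_left inner_zero_left, simplified]
  have "D (bracket7 (e7 1) (e7 5)) \<bullet> e7 1 = bracket7 (D (e7 1)) (e7 5) \<bullet> e7 1 + bracket7 (e7 1) (D (e7 5)) \<bullet> e7 1"
    using der by (simp add: inner_add_left)
  note q_1_5_1 = this[simplified bb brc1 brc2 brc3 brc4 brc5 brc6 brc7 e7n linear_neg[OF lin] linear_0[OF lin] inner_minus_left inner_zero_left, simplified]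
  have "D (bracket7 (e7 1) (e7 5)) \<bullet> e7 2 = bracket7 (D (e7 1)) (e7 5) \<bullet> e7 2 + bracket7 (e7 1) (D (e7 5)) \<bullet> e7 2"
    using der by (simp add: inner_add_left)
  note q_1_5_2 = this[simplified bb brc1 brc2 brc3 brc4 brc5 brc6 brc7 e7n linear_neg[OF lin] linear_0[OF lin] inner_minus_left inner_zero_left, simplified]
  have "D (bracket7 (e7 1) (e7 5)) \<bullet> e7 3 = bracket7 (D (e7 1)) (e7 5) \<bullet> e7 3 + bracket7 (e7 1) (D (e7 5)) \<bullet> e7 3"
    using der by (simp add: inner_add_left)
  note q_1_5_3 = this[simplified bb brc1 brc2 brc3 brc4 brc5 brc6 brc7 e7n linear_neg[OF lin] linear_0[OF lin] inner_minus_left inner_zero_left, simplified]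
  have "D (bracket7 (e7 1) (e7 5)) \<bullet> e7 4 = bracket7 (D (e7 1)) (e7 5) \<bullet> e7 4 + bracket7 (e7 1) (D (e7 5)) \<bullet> e7 4"
    using der by (simp add: inner_add_left)
  note q_1_5_4 = this[simplified bb brc1 brc2 brc3 brc4 brc5 brc6 brc7 e7n linear_neg[OF lin] linear_0[OF lin] inner_minus_left inner_zero_left, simplified]
  have "D (bracket7 (e7 1) (e7 5)) \<bullet> e7 5 = bracket7 (D (e7 1)) (e7 5) \<bullet> e7 5 + bracket7 (e7 1) (D (e7 5)) \<bullet> e7 5"
    using der by (simp add: inner_add_left)
  note q_1_5_5 = this[simplified bb brc1 brc2 brc3 brc4 brc5 brc6 brc7 e7n linear_neg[OF lin] linear_0[OF lin] inner_minus_left inner_zero_left, simplified]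
  have "D (bracket7 (e7 1) (e7 5)) \<bullet> e7 6 = bracket7 (D (e7 1)) (e7 5) \<bullet> e7 6 + bracket7 (e7 1) (D (e7 5)) \<bullet> e7 6"
    using der by (simp add: inner_add_left)
  note q_1_5_6 = this[simplified bb brc1 brc2 brc3 brc4 brc5 brc6 brc7 e7n linear_neg[OF lin] linear_0[OF lin] inner_minus_left inner_zero_left, simplified]
  have "D (bracket7 (e7 1) (e7 5)) \<bullet> e7 7 = bracket7 (D (e7 1)) (e7 5) \<bullet> e7 7 + bracket7 (e7 1) (D (e7 5)) \<bullet> e7 7"
    using der by (simp add: inner_add_left)
  note q_1_5_7 = this[simplified bb brc1 brc2 brc3 brc4 brc5 brc6 brc7 e7n linear_neg[OF lin] linear_0[OF lin] inner_minus_left inner_zero_left, simplified]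
  have "D (bracket7 (e7 1) (e7 6)) \<bullet> e7 1 = bracket7 (D (e7 1)) (e7 6) \<bullet> e7 1 + bracket7 (e7 1) (D (e7 6)) \<bullet> e7 1"
    using der by (simp add: inner_add_left)
  note q_1_6_1 = this[simplified bb brc1 brc2 brc3 brc4 brc5 brc6 brc7 e7n linear_neg[OF lin] linear_0[OF lin] inner_minus_left inner_zero_left, simplified]
  have "D (bracket7 (e7 1) (e7 6)) \<bullet> e7 2 = bracket7 (D (e7 1)) (e7 6) \<bullet> e7 2 + bracket7 (e7 1) (D (e7 6)) \<bullet> e7 2"
    using der by (simp add: inner_add_left)
  note q_1_6_2 = this[simplified bb brc1 brc2 brc3 brc4 brc5 brc6 brc7 e7n linear_neg[OF lin] linear_0[OF lin] inner_minus_left inner_zero_left, simplified]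
  have "D (bracket7 (e7 1) (e7 6)) \<bullet> e7 3 = bracket7 (D (e7 1)) (e7 6) \<bullet> e7 3 + bracket7 (e7 1) (D (e7 6)) \<bullet> e7 3"
    using der by (simp add: inner_add_left)
  note q_1_6_3 = this[simplified bb brc1 brc2 brc3 brc4 brc5 brc6 brc7 e7n linear_neg[OF lin] linear_0[OF lin] inner_minus_left inner_zero_left, simplified]
  have "D (bracket7 (e7 1) (e7 6)) \<bullet> e7 4 = bracket7 (D (e7 1)) (e7 6) \<bullet> e7 4 + bracket7 (e7 1) (D (e7 6)) \<bullet> e7 4"
    using der by (simp add: inner_add_left)
  note q_1_6_4 = this[simplified bb brc1 brc2 brc3 brc4 brc5 brc6 brc7 e7n linear_neg[OF lin] linear_0[OF lin] inner_minus_left inner_zero_left, simplified]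
  have "D (bracket7 (e7 1) (e7 6)) \<bullet> e7 5 = bracket7 (D (e7 1)) (e7 6) \<bullet> e7 5 + bracket7 (e7 1) (D (e7 6)) \<bullet> e7 5"
    using der by (simp add: inner_add_left)
  note q_1_6_5 = this[simplified bb brc1 brc2 brc3 brc4 brc5 brc6 brc7 e7n linear_neg[OF lin] linear_0[OF lin] inner_minus_left inner_zero_left, simplified]
  have "D (bracket7 (e7 1) (e7 6)) \<bullet> e7 6 = bracket7 (D (e7 1)) (e7 6) \<bullet> e7 6 + bracket7 (e7 1) (D (e7 6)) \<bullet> e7 6"
    using der by (simp add: inner_add_left)
  note q_1_6_6 = this[simplified bb brc1 brc2 brc3 brc4 brc5 brc6 brc7 e7n linear_neg[OF lin] linear_0[OF lin] inner_minus_left inner_zero_left, simplified]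
  have "D (bracket7 (e7 1) (e7 6)) \<bullet> e7 7 = bracket7 (D (e7 1)) (e7 6) \<bullet> e7 7 + bracket7 (e7 1) (D (e7 6)) \<bullet> e7 7"
    using der by (simp add: inner_add_left)
  note q_1_6_7 = this[simplified bb brc1 brc2 brc3 brc4 brc5 brc6 brc7 e7n linear_neg[OF lin] linear_0[OF lin] inner_minus_left inner_zero_left, simplified]
  have "D (bracket7 (e7 1) (e7 7)) \<bullet> e7 4 = bracket7 (D (e7 1)) (e7 7) \<bullet> e7 4 + bracket7 (e7 1) (D (e7 7)) \<bullet> e7 4"
    using der by (simp add: inner_add_left)
  note q_1_7_4 = this[simplified bb brc1 brc2 brc3 brc4 brc5 brc6 brc7 e7n linear_neg[OF lin] linear_0[OF lin] inner_minus_left inner_zero_left, simplified]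
  have "D (bracket7 (e7 1) (e7 7)) \<bullet> e7 6 = bracket7 (D (e7 1)) (e7 7) \<bullet> e7 6 + bracket7 (e7 1) (D (e7 7)) \<bullet> e7 6"
    using der by (simp add: inner_add_left)
  note q_1_7_6 = this[simplified bb brc1 brc2 brc3 brc4 brc5 brc6 brc7 e7n linear_neg[OF lin] linear_0[OF lin] inner_minus_left inner_zero_left, simplified]
  have "D (bracket7 (e7 1) (e7 7)) \<bullet> e7 7 = bracket7 (D (e7 1)) (e7 7) \<bullet> e7 7 + bracket7 (e7 1) (D (e7 7)) \<bullet> e7 7"
    using der by (simp add: inner_add_left)
  note q_1_7_7 = this[simplified bb brc1 brc2 brc3 brc4 brc5 brc6 brc7 e7n linear_neg[OF lin] linear_0[OF lin] inner_minus_left inner_zero_left, simplified]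
  have "D (bracket7 (e7 2) (e7 3)) \<bullet> e7 1 = bracket7 (D (e7 2)) (e7 3) \<bullet> e7 1 + bracket7 (e7 2) (D (e7 3)) \<bullet> e7 1"
    using der by (simp add: inner_add_left)
  note q_2_3_1 = this[simplified bb brc1 brc2 brc3 brc4 brc5 brc6 brc7 e7n linear_neg[OF lin] linear_0[OF lin] inner_minus_left inner_zero_left, simplified]
  have "D (bracket7 (e7 2) (e7 3)) \<bullet> e7 2 = bracket7 (D (e7 2)) (e7 3) \<bullet> e7 2 + bracket7 (e7 2) (D (e7 3)) \<bullet> e7 2"
    using der by (simp add: inner_add_left)
  note q_2_3_2 = this[simplified bb brc1 brc2 brc3 brc4 brc5 brc6 brc7 e7n linear_neg[OF lin] linear_0[OF lin] inner_minus_left inner_zero_left, simplified]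
  have "D (bracket7 (e7 2) (e7 3)) \<bullet> e7 3 = bracket7 (D (e7 2)) (e7 3) \<bullet> e7 3 + bracket7 (e7 2) (D (e7 3)) \<bullet> e7 3"
    using der by (simp add: inner_add_left)
  note q_2_3_3 = this[simplified bb brc1 brc2 brc3 brc4 brc5 brc6 brc7 e7n linear_neg[OF lin] linear_0[OF lin] inner_minus_left inner_zero_left, simplified]
  have "D (bracket7 (e7 2) (e7 3)) \<bullet> e7 4 = bracket7 (D (e7 2)) (e7 3) \<bullet> e7 4 + bracket7 (e7 2) (D (e7 3)) \<bullet> e7 4"
    using der by (simp add: inner_add_left)
  note q_2_3_4 = this[simplified bb brc1 brc2 brc3 brc4 brc5 brc6 brc7 e7n linear_neg[OF lin] linear_0[OF lin] inner_minus_left inner_zero_left, simplified]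
  have "D (bracket7 (e7 2) (e7 3)) \<bullet> e7 5 = bracket7 (D (e7 2)) (e7 3) \<bullet> e7 5 + bracket7 (e7 2) (D (e7 3)) \<bullet> e7 5"
    using der by (simp add: inner_add_left)
  note q_2_3_5 = this[simplified bb brc1 brc2 brc3 brc4 brc5 brc6 brc7 e7n linear_neg[OF lin] linear_0[OF lin] inner_minus_left inner_zero_left, simplified]
  have "D (bracket7 (e7 2) (e7 3)) \<bullet> e7 6 = bracket7 (D (e7 2)) (e7 3) \<bullet> e7 6 + bracket7 (e7 2) (D (e7 3)) \<bullet> e7 6"
    using der by (simp add: inner_add_left)
  note q_2_3_6 = this[simplified bb brc1 brc2 brc3 brc4 brc5 brc6 brc7 e7n linear_neg[OF lin] linear_0[OF lin] inner_minus_left inner_zero_left, simplified]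
  have "D (bracket7 (e7 2) (e7 3)) \<bullet> e7 7 = bracket7 (D (e7 2)) (e7 3) \<bullet> e7 7 + bracket7 (e7 2) (D (e7 3)) \<bullet> e7 7"
    using der by (simp add: inner_add_left)
  note q_2_3_7 = this[simplified bb brc1 brc2 brc3 brc4 brc5 brc6 brc7 e7n linear_neg[OF lin] linear_0[OF lin] inner_minus_left inner_zero_left, simplified]
  have "D (bracket7 (e7 2) (e7 4)) \<bullet> e7 4 = bracket7 (D (e7 2)) (e7 4) \<bullet> e7 4 + bracket7 (e7 2) (D (e7 4)) \<bullet> e7 4"
    using der by (simp add: inner_add_left)
  note q_2_4_4 = this[simplified bb brc1 brc2 brc3 brc4 brc5 brc6 brc7 e7n linear_neg[OF lin] linear_0[OF lin] inner_minus_left inner_zero_left, simplified]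
  have "D (bracket7 (e7 2) (e7 4)) \<bullet> e7 5 = bracket7 (D (e7 2)) (e7 4) \<bullet> e7 5 + bracket7 (e7 2) (D (e7 4)) \<bullet> e7 5"
    using der by (simp add: inner_add_left)
  note q_2_4_5 = this[simplified bb brc1 brc2 brc3 brc4 brc5 brc6 brc7 e7n linear_neg[OF lin] linear_0[OF lin] inner_minus_left inner_zero_left, simplified]
  have "D (bracket7 (e7 2) (e7 4)) \<bullet> e7 6 = bracket7 (D (e7 2)) (e7 4) \<bullet> e7 6 + bracket7 (e7 2) (D (e7 4)) \<bullet> e7 6"
    using der by (simp add: inner_add_left)
  note q_2_4_6 = this[simplified bb brc1 brc2 brc3 brc4 brc5 brc6 brc7 e7n linear_neg[OF lin] linear_0[OF lin] inner_minus_left inner_zero_left, simplified]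
  have "D (bracket7 (e7 2) (e7 4)) \<bullet> e7 7 = bracket7 (D (e7 2)) (e7 4) \<bullet> e7 7 + bracket7 (e7 2) (D (e7 4)) \<bullet> e7 7"
    using der by (simp add: inner_add_left)
  note q_2_4_7 = this[simplified bb brc1 brc2 brc3 brc4 brc5 brc6 brc7 e7n linear_neg[OF lin] linear_0[OF lin] inner_minus_left inner_zero_left, simplified]
  have "D (bracket7 (e7 2) (e7 5)) \<bullet> e7 1 = bracket7 (D (e7 2)) (e7 5) \<bullet> e7 1 + bracket7 (e7 2) (D (e7 5)) \<bullet> e7 1"
    using der by (simp add: inner_add_left)
  note q_2_5_1 = this[simplified bb brc1 brc2 brc3 brc4 brc5 brc6 brc7 e7n linear_neg[OF lin] linear_0[OF lin] inner_minus_left inner_zero_left, simplified]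
  have "D (bracket7 (e7 2) (e7 5)) \<bullet> e7 2 = bracket7 (D (e7 2)) (e7 5) \<bullet> e7 2 + bracket7 (e7 2) (D (e7 5)) \<bullet> e7 2"
    using der by (simp add: inner_add_left)
  note q_2_5_2 = this[simplified bb brc1 brc2 brc3 brc4 brc5 brc6 brc7 e7n linear_neg[OF lin] linear_0[OF lin] inner_minus_left inner_zero_left, simplified]
  have "D (bracket7 (e7 2) (e7 5)) \<bullet> e7 3 = bracket7 (D (e7 2)) (e7 5) \<bullet> e7 3 + bracket7 (e7 2) (D (e7 5)) \<bullet> e7 3"
    using der by (simp add: inner_add_left)
  note q_2_5_3 = this[simplified bb brc1 brc2 brc3 brc4 brc5 brc6 brc7 e7n linear_neg[OF lin] linear_0[OF lin] inner_minus_left inner_zero_left, simplified]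
  have "D (bracket7 (e7 2) (e7 5)) \<bullet> e7 4 = bracket7 (D (e7 2)) (e7 5) \<bullet> e7 4 + bracket7 (e7 2) (D (e7 5)) \<bullet> e7 4"
    using der by (simp add: inner_add_left)
  note q_2_5_4 = this[simplified bb brc1 brc2 brc3 brc4 brc5 brc6 brc7 e7n linear_neg[OF lin] linear_0[OF lin] inner_minus_left inner_zero_left, simplified]
  have "D (bracket7 (e7 2) (e7 5)) \<bullet> e7 5 = bracket7 (D (e7 2)) (e7 5) \<bullet> e7 5 + bracket7 (e7 2) (D (e7 5)) \<bullet> e7 5"
    using der by (simp add: inner_add_left)
  note q_2_5_5 = this[simplified bb brc1 brc2 brc3 brc4 brc5 brc6 brc7 e7n linear_neg[OF lin] linear_0[OF lin] inner_minus_left inner_zero_left, simplified]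
  have "D (bracket7 (e7 2) (e7 5)) \<bullet> e7 6 = bracket7 (D (e7 2)) (e7 5) \<bullet> e7 6 + bracket7 (e7 2) (D (e7 5)) \<bullet> e7 6"
    using der by (simp add: inner_add_left)
  note q_2_5_6 = this[simplified bb brc1 brc2 brc3 brc4 brc5 brc6 brc7 e7n linear_neg[OF lin] linear_0[OF lin] inner_minus_left inner_zero_left, simplified]
  have "D (bracket7 (e7 2) (e7 5)) \<bullet> e7 7 = bracket7 (D (e7 2)) (e7 5) \<bullet> e7 7 + bracket7 (e7 2) (D (e7 5)) \<bullet> e7 7"
    using der by (simp add: inner_add_left)
  note q_2_5_7 = this[simplified bb brc1 brc2 brc3 brc4 brc5 brc6 brc7 e7n linear_neg[OF lin] linear_0[OF lin] inner_minus_left inner_zero_left, simplified]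
  have "D (bracket7 (e7 2) (e7 6)) \<bullet> e7 4 = bracket7 (D (e7 2)) (e7 6) \<bullet> e7 4 + bracket7 (e7 2) (D (e7 6)) \<bullet> e7 4"
    using der by (simp add: inner_add_left)
  note q_2_6_4 = this[simplified bb brc1 brc2 brc3 brc4 brc5 brc6 brc7 e7n linear_neg[OF lin] linear_0[OF lin] inner_minus_left inner_zero_left, simplified]
  have "D (bracket7 (e7 2) (e7 6)) \<bullet> e7 5 = bracket7 (D (e7 2)) (e7 6) \<bullet> e7 5 + bracket7 (e7 2) (D (e7 6)) \<bullet> e7 5"
    using der by (simp add: inner_add_left)
  note q_2_6_5 = this[simplified bb brc1 brc2 brc3 brc4 brc5 brc6 brc7 e7n linear_neg[OF lin] linear_0[OF lin] inner_minus_left inner_zero_left, simplified]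
  have "D (bracket7 (e7 2) (e7 6)) \<bullet> e7 7 = bracket7 (D (e7 2)) (e7 6) \<bullet> e7 7 + bracket7 (e7 2) (D (e7 6)) \<bullet> e7 7"
    using der by (simp add: inner_add_left)
  note q_2_6_7 = this[simplified bb brc1 brc2 brc3 brc4 brc5 brc6 brc7 e7n linear_neg[OF lin] linear_0[OF lin] inner_minus_left inner_zero_left, simplified]
  have "D (bracket7 (e7 2) (e7 7)) \<bullet> e7 4 = bracket7 (D (e7 2)) (e7 7) \<bullet> e7 4 + bracket7 (e7 2) (D (e7 7)) \<bullet> e7 4"
    using der by (simp add: inner_add_left)
  note q_2_7_4 = this[simplified bb brc1 brc2 brc3 brc4 brc5 brc6 brc7 e7n linear_neg[OF lin] linear_0[OF lin] inner_minus_left inner_zero_left, simplified]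
  have "D (bracket7 (e7 2) (e7 7)) \<bullet> e7 5 = bracket7 (D (e7 2)) (e7 7) \<bullet> e7 5 + bracket7 (e7 2) (D (e7 7)) \<bullet> e7 5"
    using der by (simp add: inner_add_left)
  note q_2_7_5 = this[simplified bb brc1 brc2 brc3 brc4 brc5 brc6 brc7 e7n linear_neg[OF lin] linear_0[OF lin] inner_minus_left inner_zero_left, simplified]
  have "D (bracket7 (e7 2) (e7 7)) \<bullet> e7 7 = bracket7 (D (e7 2)) (e7 7) \<bullet> e7 7 + bracket7 (e7 2) (D (e7 7)) \<bullet> e7 7"
    using der by (simp add: inner_add_left)
  note q_2_7_7 = this[simplified bb brc1 brc2 brc3 brc4 brc5 brc6 brc7 e7n linear_neg[OF lin] linear_0[OF lin] inner_minus_left inner_zero_left, simplified]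
  have "D (bracket7 (e7 3) (e7 4)) \<bullet> e7 1 = bracket7 (D (e7 3)) (e7 4) \<bullet> e7 1 + bracket7 (e7 3) (D (e7 4)) \<bullet> e7 1"
    using der by (simp add: inner_add_left)
  note q_3_4_1 = this[simplified bb brc1 brc2 brc3 brc4 brc5 brc6 brc7 e7n linear_neg[OF lin] linear_0[OF lin] inner_minus_left inner_zero_left, simplified]
  have "D (bracket7 (e7 3) (e7 4)) \<bullet> e7 2 = bracket7 (D (e7 3)) (e7 4) \<bullet> e7 2 + bracket7 (e7 3) (D (e7 4)) \<bullet> e7 2"
    using der by (simp add: inner_add_left)
  note q_3_4_2 = this[simplified bb brc1 brc2 brc3 brc4 brc5 brc6 brc7 e7n linear_neg[OF lin] linear_0[OF lin] inner_minus_left inner_zero_left, simplified]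
  have "D (bracket7 (e7 3) (e7 4)) \<bullet> e7 3 = bracket7 (D (e7 3)) (e7 4) \<bullet> e7 3 + bracket7 (e7 3) (D (e7 4)) \<bullet> e7 3"
    using der by (simp add: inner_add_left)
  note q_3_4_3 = this[simplified bb brc1 brc2 brc3 brc4 brc5 brc6 brc7 e7n linear_neg[OF lin] linear_0[OF lin] inner_minus_left inner_zero_left, simplified]
  have "D (bracket7 (e7 3) (e7 4)) \<bullet> e7 4 = bracket7 (D (e7 3)) (e7 4) \<bullet> e7 4 + bracket7 (e7 3) (D (e7 4)) \<bullet> e7 4"
    using der by (simp add: inner_add_left)
  note q_3_4_4 = this[simplified bb brc1 brc2 brc3 brc4 brc5 brc6 brc7 e7n linear_neg[OF lin] linear_0[OF lin] inner_minus_left inner_zero_left, simplified]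
  have "D (bracket7 (e7 3) (e7 4)) \<bullet> e7 5 = bracket7 (D (e7 3)) (e7 4) \<bullet> e7 5 + bracket7 (e7 3) (D (e7 4)) \<bullet> e7 5"
    using der by (simp add: inner_add_left)
  note q_3_4_5 = this[simplified bb brc1 brc2 brc3 brc4 brc5 brc6 brc7 e7n linear_neg[OF lin] linear_0[OF lin] inner_minus_left inner_zero_left, simplified]
  have "D (bracket7 (e7 3) (e7 4)) \<bullet> e7 6 = bracket7 (D (e7 3)) (e7 4) \<bullet> e7 6 + bracket7 (e7 3) (D (e7 4)) \<bullet> e7 6"
    using der by (simp add: inner_add_left)
  note q_3_4_6 = this[simplified bb brc1 brc2 brc3 brc4 brc5 brc6 brc7 e7n linear_neg[OF lin] linear_0[OF lin] inner_minus_left inner_zero_left, simplified]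
  have "D (bracket7 (e7 3) (e7 4)) \<bullet> e7 7 = bracket7 (D (e7 3)) (e7 4) \<bullet> e7 7 + bracket7 (e7 3) (D (e7 4)) \<bullet> e7 7"
    using der by (simp add: inner_add_left)
  note q_3_4_7 = this[simplified bb brc1 brc2 brc3 brc4 brc5 brc6 brc7 e7n linear_neg[OF lin] linear_0[OF lin] inner_minus_left inner_zero_left, simplified]
  have "D (bracket7 (e7 3) (e7 5)) \<bullet> e7 5 = bracket7 (D (e7 3)) (e7 5) \<bullet> e7 5 + bracket7 (e7 3) (D (e7 5)) \<bullet> e7 5"
    using der by (simp add: inner_add_left)
  note q_3_5_5 = this[simplified bb brc1 brc2 brc3 brc4 brc5 brc6 brc7 e7n linear_neg[OF lin] linear_0[OF lin] inner_minus_left inner_zero_left, simplified]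
  have "D (bracket7 (e7 3) (e7 5)) \<bullet> e7 7 = bracket7 (D (e7 3)) (e7 5) \<bullet> e7 7 + bracket7 (e7 3) (D (e7 5)) \<bullet> e7 7"
    using der by (simp add: inner_add_left)
  note q_3_5_7 = this[simplified bb brc1 brc2 brc3 brc4 brc5 brc6 brc7 e7n linear_neg[OF lin] linear_0[OF lin] inner_minus_left inner_zero_left, simplified]
  have "D (bracket7 (e7 3) (e7 6)) \<bullet> e7 5 = bracket7 (D (e7 3)) (e7 6) \<bullet> e7 5 + bracket7 (e7 3) (D (e7 6)) \<bullet> e7 5"
    using der by (simp add: inner_add_left)
  note q_3_6_5 = this[simplified bb brc1 brc2 brc3 brc4 brc5 brc6 brc7 e7n linear_neg[OF lin] linear_0[OF lin] inner_minus_left inner_zero_left, simplified]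
  have "D (bracket7 (e7 3) (e7 6)) \<bullet> e7 7 = bracket7 (D (e7 3)) (e7 6) \<bullet> e7 7 + bracket7 (e7 3) (D (e7 6)) \<bullet> e7 7"
    using der by (simp add: inner_add_left)
  note q_3_6_7 = this[simplified bb brc1 brc2 brc3 brc4 brc5 brc6 brc7 e7n linear_neg[OF lin] linear_0[OF lin] inner_minus_left inner_zero_left, simplified]
  have "D (bracket7 (e7 3) (e7 7)) \<bullet> e7 5 = bracket7 (D (e7 3)) (e7 7) \<bullet> e7 5 + bracket7 (e7 3) (D (e7 7)) \<bullet> e7 5"
    using der by (simp add: inner_add_left)
  note q_3_7_5 = this[simplified bb brc1 brc2 brc3 brc4 brc5 brc6 brc7 e7n linear_neg[OF lin] linear_0[OF lin] inner_minus_left inner_zero_left, simplified]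
  have "D (bracket7 (e7 3) (e7 7)) \<bullet> e7 7 = bracket7 (D (e7 3)) (e7 7) \<bullet> e7 7 + bracket7 (e7 3) (D (e7 7)) \<bullet> e7 7"
    using der by (simp add: inner_add_left)
  note q_3_7_7 = this[simplified bb brc1 brc2 brc3 brc4 brc5 brc6 brc7 e7n linear_neg[OF lin] linear_0[OF lin] inner_minus_left inner_zero_left, simplified]
  have "D (bracket7 (e7 4) (e7 5)) \<bullet> e7 6 = bracket7 (D (e7 4)) (e7 5) \<bullet> e7 6 + bracket7 (e7 4) (D (e7 5)) \<bullet> e7 6"
    using der by (simp add: inner_add_left)
  note q_4_5_6 = this[simplified bb brc1 brc2 brc3 brc4 brc5 brc6 brc7 e7n linear_neg[OF lin] linear_0[OF lin] inner_minus_left inner_zero_left, simplified]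
  have "D (bracket7 (e7 4) (e7 5)) \<bullet> e7 7 = bracket7 (D (e7 4)) (e7 5) \<bullet> e7 7 + bracket7 (e7 4) (D (e7 5)) \<bullet> e7 7"
    using der by (simp add: inner_add_left)
  note q_4_5_7 = this[simplified bb brc1 brc2 brc3 brc4 brc5 brc6 brc7 e7n linear_neg[OF lin] linear_0[OF lin] inner_minus_left inner_zero_left, simplified]
  have "D (bracket7 (e7 4) (e7 6)) \<bullet> e7 6 = bracket7 (D (e7 4)) (e7 6) \<bullet> e7 6 + bracket7 (e7 4) (D (e7 6)) \<bullet> e7 6"
    using der by (simp add: inner_add_left)
  note q_4_6_6 = this[simplified bb brc1 brc2 brc3 brc4 brc5 brc6 brc7 e7n linear_neg[OF lin] linear_0[OF lin] inner_minus_left inner_zero_left, simplified]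
  have "D (bracket7 (e7 4) (e7 6)) \<bullet> e7 7 = bracket7 (D (e7 4)) (e7 6) \<bullet> e7 7 + bracket7 (e7 4) (D (e7 6)) \<bullet> e7 7"
    using der by (simp add: inner_add_left)
  note q_4_6_7 = this[simplified bb brc1 brc2 brc3 brc4 brc5 brc6 brc7 e7n linear_neg[OF lin] linear_0[OF lin] inner_minus_left inner_zero_left, simplified]
  have "D (bracket7 (e7 4) (e7 7)) \<bullet> e7 6 = bracket7 (D (e7 4)) (e7 7) \<bullet> e7 6 + bracket7 (e7 4) (D (e7 7)) \<bullet> e7 6"
    using der by (simp add: inner_add_left)
  note q_4_7_6 = this[simplified bb brc1 brc2 brc3 brc4 brc5 brc6 brc7 e7n linear_neg[OF lin] linear_0[OF lin] inner_minus_left inner_zero_left, simplified]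
  have "D (bracket7 (e7 4) (e7 7)) \<bullet> e7 7 = bracket7 (D (e7 4)) (e7 7) \<bullet> e7 7 + bracket7 (e7 4) (D (e7 7)) \<bullet> e7 7"
    using der by (simp add: inner_add_left)
  note q_4_7_7 = this[simplified bb brc1 brc2 brc3 brc4 brc5 brc6 brc7 e7n linear_neg[OF lin] linear_0[OF lin] inner_minus_left inner_zero_left, simplified]
  have "D (bracket7 (e7 5) (e7 6)) \<bullet> e7 7 = bracket7 (D (e7 5)) (e7 6) \<bullet> e7 7 + bracket7 (e7 5) (D (e7 6)) \<bullet> e7 7"
    using der by (simp add: inner_add_left)
  note q_5_6_7 = this[simplified bb brc1 brc2 brc3 brc4 brc5 brc6 brc7 e7n linear_neg[OF lin] linear_0[OF lin] inner_minus_left inner_zero_left, simplified]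
  have "D (bracket7 (e7 5) (e7 7)) \<bullet> e7 7 = bracket7 (D (e7 5)) (e7 7) \<bullet> e7 7 + bracket7 (e7 5) (D (e7 7)) \<bullet> e7 7"
    using der by (simp add: inner_add_left)
  note q_5_7_7 = this[simplified bb brc1 brc2 brc3 brc4 brc5 brc6 brc7 e7n linear_neg[OF lin] linear_0[OF lin] inner_minus_left inner_zero_left, simplified]
  have "D (bracket7 (e7 6) (e7 7)) \<bullet> e7 7 = bracket7 (D (e7 6)) (e7 7) \<bullet> e7 7 + bracket7 (e7 6) (D (e7 7)) \<bullet> e7 7"
    using der by (simp add: inner_add_left)
  note q_6_7_7 = this[simplified bb brc1 brc2 brc3 brc4 brc5 brc6 brc7 e7n linear_neg[OF lin] linear_0[OF lin] inner_minus_left inner_zero_left, simplified]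
  have z_1_2: "D (e7 2) \<bullet> e7 (Suc 0) = 0" using q_1_2_1 q_1_2_2 q_1_2_3 q_1_2_4 q_1_2_5 q_1_2_6 q_1_2_7 q_1_3_4 q_1_3_5 q_1_3_6 q_1_3_7 q_1_4_1 q_1_4_2 q_1_4_3 q_1_4_4 q_1_4_5 q_1_4_6 q_1_4_7 q_1_5_1 q_1_5_2 q_1_5_3 q_1_5_4 q_1_5_5 q_1_5_6 q_1_5_7 q_1_6_1 q_1_6_2 q_1_6_3 q_1_6_4 q_1_6_5 q_1_6_6 q_1_6_7 q_1_7_4 q_1_7_6 q_1_7_7 q_2_3_1 q_2_3_2 q_2_3_3 q_2_3_4 q_2_3_5 q_2_3_6 q_2_3_7 q_2_4_4 q_2_4_5 q_2_4_6 q_2_4_7 q_2_5_1 q_2_5_2 q_2_5_3 q_2_5_4 q_2_5_5 q_2_5_6 q_2_5_7 q_2_6_4 q_2_6_5 q_2_6_7 q_2_7_4 q_2_7_5 q_2_7_7 q_3_4_1 q_3_4_2 q_3_4_3 q_3_4_4 q_3_4_5 q_3_4_6 q_3_4_7 q_3_5_5 q_3_5_7 q_3_6_5 q_3_6_7 q_3_7_5 q_3_7_7 q_4_5_6 q_4_5_7 q_4_6_6 q_4_6_7 q_4_7_6 q_4_7_7 q_5_6_7 q_5_7_7 q_6_7_7 by linarith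
  have z_1_3: "D (e7 3) \<bullet> e7 (Suc 0) = 0" using q_1_2_1 q_1_2_2 q_1_2_3 q_1_2_4 q_1_2_5 q_1_2_6 q_1_2_7 q_1_3_4 q_1_3_5 q_1_3_6 q_1_3_7 q_1_4_1 q_1_4_2 q_1_4_3 q_1_4_4 q_1_4_5 q_1_4_6 q_1_4_7 q_1_5_1 q_1_5_2 q_1_5_3 q_1_5_4 q_1_5_5 q_1_5_6 q_1_5_7 q_1_6_1 q_1_6_2 q_1_6_3 q_1_6_4 q_1_6_5 q_1_6_6 q_1_6_7 q_1_7_4 q_1_7_6 q_1_7_7 q_2_3_1 q_2_3_2 q_2_3_3 q_2_3_4 q_2_3_5 q_2_3_6 q_2_3_7 q_2_4_4 q_2_4_5 q_2_4_6 q_2_4_7 q_2_5_1 q_2_5_2 q_2_5_3 q_2_5_4 q_2_5_5 q_2_5_6 q_2_5_7 q_2_6_4 q_2_6_5 q_2_6_7 q_2_7_4 q_2_7_5 q_2_7_7 q_3_4_1 q_3_4_2 q_3_4_3 q_3_4_4 q_3_4_5 q_3_4_6 q_3_4_7 q_3_5_5 q_3_5_7 q_3_6_5 q_3_6_7 q_3_7_5 q_3_7_7 q_4_5_6 q_4_5_7 q_4_6_6 q_4_6_7 q_4_7_6 q_4_7_7 q_5_6_7 q_5_7_7 q_6_7_7 by linarith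
  have z_2_3: "D (e7 3) \<bullet> e7 2 = 0" using q_1_2_1 q_1_2_2 q_1_2_3 q_1_2_4 q_1_2_5 q_1_2_6 q_1_2_7 q_1_3_4 q_1_3_5 q_1_3_6 q_1_3_7 q_1_4_1 q_1_4_2 q_1_4_3 q_1_4_4 q_1_4_5 q_1_4_6 q_1_4_7 q_1_5_1 q_1_5_2 q_1_5_3 q_1_5_4 q_1_5_5 q_1_5_6 q_1_5_7 q_1_6_1 q_1_6_2 q_1_6_3 q_1_6_4 q_1_6_5 q_1_6_6 q_1_6_7 q_1_7_4 q_1_7_6 q_1_7_7 q_2_3_1 q_2_3_2 q_2_3_3 q_2_3_4 q_2_3_5 q_2_3_6 q_2_3_7 q_2_4_4 q_2_4_5 q_2_4_6 q_2_4_7 q_2_5_1 q_2_5_2 q_2_5_3 q_2_5_4 q_2_5_5 q_2_5_6 q_2_5_7 q_2_6_4 q_2_6_5 q_2_6_7 q_2_7_4 q_2_7_5 q_2_7_7 q_3_4_1 q_3_4_2 q_3_4_3 q_3_4_4 q_3_4_5 q_3_4_6 q_3_4_7 q_3_5_5 q_3_5_7 q_3_6_5 q_3_6_7 q_3_7_5 q_3_7_7 q_4_5_6 q_4_5_7 q_4_6_6 q_4_6_7 q_4_7_6 q_4_7_7 q_5_6_7 q_5_7_7 q_6_7_7 by linarith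
  have z_1_4: "D (e7 4) \<bullet> e7 (Suc 0) = 0" using q_1_2_1 q_1_2_2 q_1_2_3 q_1_2_4 q_1_2_5 q_1_2_6 q_1_2_7 q_1_3_4 q_1_3_5 q_1_3_6 q_1_3_7 q_1_4_1 q_1_4_2 q_1_4_3 q_1_4_4 q_1_4_5 q_1_4_6 q_1_4_7 q_1_5_1 q_1_5_2 q_1_5_3 q_1_5_4 q_1_5_5 q_1_5_6 q_1_5_7 q_1_6_1 q_1_6_2 q_1_6_3 q_1_6_4 q_1_6_5 q_1_6_6 q_1_6_7 q_1_7_4 q_1_7_6 q_1_7_7 q_2_3_1 q_2_3_2 q_2_3_3 q_2_3_4 q_2_3_5 q_2_3_6 q_2_3_7 q_2_4_4 q_2_4_5 q_2_4_6 q_2_4_7 q_2_5_1 q_2_5_2 q_2_5_3 q_2_5_4 q_2_5_5 q_2_5_6 q_2_5_7 q_2_6_4 q_2_6_5 q_2_6_7 q_2_7_4 q_2_7_5 q_2_7_7 q_3_4_1 q_3_4_2 q_3_4_3 q_3_4_4 q_3_4_5 q_3_4_6 q_3_4_7 q_3_5_5 q_3_5_7 q_3_6_5 q_3_6_7 q_3_7_5 q_3_7_7 q_4_5_6 q_4_5_7 q_4_6_6 q_4_6_7 q_4_7_6 q_4_7_7 q_5_6_7 q_5_7_7 q_6_7_7 by linarith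
  have z_2_4: "D (e7 4) \<bullet> e7 2 = 0" using q_1_2_1 q_1_2_2 q_1_2_3 q_1_2_4 q_1_2_5 q_1_2_6 q_1_2_7 q_1_3_4 q_1_3_5 q_1_3_6 q_1_3_7 q_1_4_1 q_1_4_2 q_1_4_3 q_1_4_4 q_1_4_5 q_1_4_6 q_1_4_7 q_1_5_1 q_1_5_2 q_1_5_3 q_1_5_4 q_1_5_5 q_1_5_6 q_1_5_7 q_1_6_1 q_1_6_2 q_1_6_3 q_1_6_4 q_1_6_5 q_1_6_6 q_1_6_7 q_1_7_4 q_1_7_6 q_1_7_7 q_2_3_1 q_2_3_2 q_2_3_3 q_2_3_4 q_2_3_5 q_2_3_6 q_2_3_7 q_2_4_4 q_2_4_5 q_2_4_6 q_2_4_7 q_2_5_1 q_2_5_2 q_2_5_3 q_2_5_4 q_2_5_5 q_2_5_6 q_2_5_7 q_2_6_4 q_2_6_5 q_2_6_7 q_2_7_4 q_2_7_5 q_2_7_7 q_3_4_1 q_3_4_2 q_3_4_3 q_3_4_4 q_3_4_5 q_3_4_6 q_3_4_7 q_3_5_5 q_3_5_7 q_3_6_5 q_3_6_7 q_3_7_5 q_3_7_7 q_4_5_6 q_4_5_7 q_4_6_6 q_4_6_7 q_4_7_6 q_4_7_7 q_5_6_7 q_5_7_7 q_6_7_7 by linarith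
  have z_3_4: "D (e7 4) \<bullet> e7 3 = 0" using q_1_2_1 q_1_2_2 q_1_2_3 q_1_2_4 q_1_2_5 q_1_2_6 q_1_2_7 q_1_3_4 q_1_3_5 q_1_3_6 q_1_3_7 q_1_4_1 q_1_4_2 q_1_4_3 q_1_4_4 q_1_4_5 q_1_4_6 q_1_4_7 q_1_5_1 q_1_5_2 q_1_5_3 q_1_5_4 q_1_5_5 q_1_5_6 q_1_5_7 q_1_6_1 q_1_6_2 q_1_6_3 q_1_6_4 q_1_6_5 q_1_6_6 q_1_6_7 q_1_7_4 q_1_7_6 q_1_7_7 q_2_3_1 q_2_3_2 q_2_3_3 q_2_3_4 q_2_3_5 q_2_3_6 q_2_3_7 q_2_4_4 q_2_4_5 q_2_4_6 q_2_4_7 q_2_5_1 q_2_5_2 q_2_5_3 q_2_5_4 q_2_5_5 q_2_5_6 q_2_5_7 q_2_6_4 q_2_6_5 q_2_6_7 q_2_7_4 q_2_7_5 q_2_7_7 q_3_4_1 q_3_4_2 q_3_4_3 q_3_4_4 q_3_4_5 q_3_4_6 q_3_4_7 q_3_5_5 q_3_5_7 q_3_6_5 q_3_6_7 q_3_7_5 q_3_7_7 q_4_5_6 q_4_5_7 q_4_6_6 q_4_6_7 q_4_7_6 q_4_7_7 q_5_6_7 q_5_7_7 q_6_7_7 by linarith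
  have z_1_5: "D (e7 5) \<bullet> e7 (Suc 0) = 0" using q_1_2_1 q_1_2_2 q_1_2_3 q_1_2_4 q_1_2_5 q_1_2_6 q_1_2_7 q_1_3_4 q_1_3_5 q_1_3_6 q_1_3_7 q_1_4_1 q_1_4_2 q_1_4_3 q_1_4_4 q_1_4_5 q_1_4_6 q_1_4_7 q_1_5_1 q_1_5_2 q_1_5_3 q_1_5_4 q_1_5_5 q_1_5_6 q_1_5_7 q_1_6_1 q_1_6_2 q_1_6_3 q_1_6_4 q_1_6_5 q_1_6_6 q_1_6_7 q_1_7_4 q_1_7_6 q_1_7_7 q_2_3_1 q_2_3_2 q_2_3_3 q_2_3_4 q_2_3_5 q_2_3_6 q_2_3_7 q_2_4_4 q_2_4_5 q_2_4_6 q_2_4_7 q_2_5_1 q_2_5_2 q_2_5_3 q_2_5_4 q_2_5_5 q_2_5_6 q_2_5_7 q_2_6_4 q_2_6_5 q_2_6_7 q_2_7_4 q_2_7_5 q_2_7_7 q_3_4_1 q_3_4_2 q_3_4_3 q_3_4_4 q_3_4_5 q_3_4_6 q_3_4_7 q_3_5_5 q_3_5_7 q_3_6_5 q_3_6_7 q_3_7_5 q_3_7_7 q_4_5_6 q_4_5_7 q_4_6_6 q_4_6_7 q_4_7_6 q_4_7_7 q_5_6_7 q_5_7_7 q_6_7_7 by linarith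
  have z_2_5: "D (e7 5) \<bullet> e7 2 = 0" using q_1_2_1 q_1_2_2 q_1_2_3 q_1_2_4 q_1_2_5 q_1_2_6 q_1_2_7 q_1_3_4 q_1_3_5 q_1_3_6 q_1_3_7 q_1_4_1 q_1_4_2 q_1_4_3 q_1_4_4 q_1_4_5 q_1_4_6 q_1_4_7 q_1_5_1 q_1_5_2 q_1_5_3 q_1_5_4 q_1_5_5 q_1_5_6 q_1_5_7 q_1_6_1 q_1_6_2 q_1_6_3 q_1_6_4 q_1_6_5 q_1_6_6 q_1_6_7 q_1_7_4 q_1_7_6 q_1_7_7 q_2_3_1 q_2_3_2 q_2_3_3 q_2_3_4 q_2_3_5 q_2_3_6 q_2_3_7 q_2_4_4 q_2_4_5 q_2_4_6 q_2_4_7 q_2_5_1 q_2_5_2 q_2_5_3 q_2_5_4 q_2_5_5 q_2_5_6 q_2_5_7 q_2_6_4 q_2_6_5 q_2_6_7 q_2_7_4 q_2_7_5 q_2_7_7 q_3_4_1 q_3_4_2 q_3_4_3 q_3_4_4 q_3_4_5 q_3_4_6 q_3_4_7 q_3_5_5 q_3_5_7 q_3_6_5 q_3_6_7 q_3_7_5 q_3_7_7 q_4_5_6 q_4_5_7 q_4_6_6 q_4_6_7 q_4_7_6 q_4_7_7 q_5_6_7 q_5_7_7 q_6_7_7 by linarith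
  have z_3_5: "D (e7 5) \<bullet> e7 3 = 0" using q_1_2_1 q_1_2_2 q_1_2_3 q_1_2_4 q_1_2_5 q_1_2_6 q_1_2_7 q_1_3_4 q_1_3_5 q_1_3_6 q_1_3_7 q_1_4_1 q_1_4_2 q_1_4_3 q_1_4_4 q_1_4_5 q_1_4_6 q_1_4_7 q_1_5_1 q_1_5_2 q_1_5_3 q_1_5_4 q_1_5_5 q_1_5_6 q_1_5_7 q_1_6_1 q_1_6_2 q_1_6_3 q_1_6_4 q_1_6_5 q_1_6_6 q_1_6_7 q_1_7_4 q_1_7_6 q_1_7_7 q_2_3_1 q_2_3_2 q_2_3_3 q_2_3_4 q_2_3_5 q_2_3_6 q_2_3_7 q_2_4_4 q_2_4_5 q_2_4_6 q_2_4_7 q_2_5_1 q_2_5_2 q_2_5_3 q_2_5_4 q_2_5_5 q_2_5_6 q_2_5_7 q_2_6_4 q_2_6_5 q_2_6_7 q_2_7_4 q_2_7_5 q_2_7_7 q_3_4_1 q_3_4_2 q_3_4_3 q_3_4_4 q_3_4_5 q_3_4_6 q_3_4_7 q_3_5_5 q_3_5_7 q_3_6_5 q_3_6_7 q_3_7_5 q_3_7_7 q_4_5_6 q_4_5_7 q_4_6_6 q_4_6_7 q_4_7_6 q_4_7_7 q_5_6_7 q_5_7_7 q_6_7_7 by linarith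
  have z_4_5: "D (e7 5) \<bullet> e7 4 = 0" using q_1_2_1 q_1_2_2 q_1_2_3 q_1_2_4 q_1_2_5 q_1_2_6 q_1_2_7 q_1_3_4 q_1_3_5 q_1_3_6 q_1_3_7 q_1_4_1 q_1_4_2 q_1_4_3 q_1_4_4 q_1_4_5 q_1_4_6 q_1_4_7 q_1_5_1 q_1_5_2 q_1_5_3 q_1_5_4 q_1_5_5 q_1_5_6 q_1_5_7 q_1_6_1 q_1_6_2 q_1_6_3 q_1_6_4 q_1_6_5 q_1_6_6 q_1_6_7 q_1_7_4 q_1_7_6 q_1_7_7 q_2_3_1 q_2_3_2 q_2_3_3 q_2_3_4 q_2_3_5 q_2_3_6 q_2_3_7 q_2_4_4 q_2_4_5 q_2_4_6 q_2_4_7 q_2_5_1 q_2_5_2 q_2_5_3 q_2_5_4 q_2_5_5 q_2_5_6 q_2_5_7 q_2_6_4 q_2_6_5 q_2_6_7 q_2_7_4 q_2_7_5 q_2_7_7 q_3_4_1 q_3_4_2 q_3_4_3 q_3_4_4 q_3_4_5 q_3_4_6 q_3_4_7 q_3_5_5 q_3_5_7 q_3_6_5 q_3_6_7 q_3_7_5 q_3_7_7 q_4_5_6 q_4_5_7 q_4_6_6 q_4_6_7 q_4_7_6 q_4_7_7 q_5_6_7 q_5_7_7 q_6_7_7 by linarith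
  have z_1_6: "D (e7 6) \<bullet> e7 (Suc 0) = 0" using q_1_2_1 q_1_2_2 q_1_2_3 q_1_2_4 q_1_2_5 q_1_2_6 q_1_2_7 q_1_3_4 q_1_3_5 q_1_3_6 q_1_3_7 q_1_4_1 q_1_4_2 q_1_4_3 q_1_4_4 q_1_4_5 q_1_4_6 q_1_4_7 q_1_5_1 q_1_5_2 q_1_5_3 q_1_5_4 q_1_5_5 q_1_5_6 q_1_5_7 q_1_6_1 q_1_6_2 q_1_6_3 q_1_6_4 q_1_6_5 q_1_6_6 q_1_6_7 q_1_7_4 q_1_7_6 q_1_7_7 q_2_3_1 q_2_3_2 q_2_3_3 q_2_3_4 q_2_3_5 q_2_3_6 q_2_3_7 q_2_4_4 q_2_4_5 q_2_4_6 q_2_4_7 q_2_5_1 q_2_5_2 q_2_5_3 q_2_5_4 q_2_5_5 q_2_5_6 q_2_5_7 q_2_6_4 q_2_6_5 q_2_6_7 q_2_7_4 q_2_7_5 q_2_7_7 q_3_4_1 q_3_4_2 q_3_4_3 q_3_4_4 q_3_4_5 q_3_4_6 q_3_4_7 q_3_5_5 q_3_5_7 q_3_6_5 q_3_6_7 q_3_7_5 q_3_7_7 q_4_5_6 q_4_5_7 q_4_6_6 q_4_6_7 q_4_7_6 q_4_7_7 q_5_6_7 q_5_7_7 q_6_7_7 by linarith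
  have z_2_6: "D (e7 6) \<bullet> e7 2 = 0" using q_1_2_1 q_1_2_2 q_1_2_3 q_1_2_4 q_1_2_5 q_1_2_6 q_1_2_7 q_1_3_4 q_1_3_5 q_1_3_6 q_1_3_7 q_1_4_1 q_1_4_2 q_1_4_3 q_1_4_4 q_1_4_5 q_1_4_6 q_1_4_7 q_1_5_1 q_1_5_2 q_1_5_3 q_1_5_4 q_1_5_5 q_1_5_6 q_1_5_7 q_1_6_1 q_1_6_2 q_1_6_3 q_1_6_4 q_1_6_5 q_1_6_6 q_1_6_7 q_1_7_4 q_1_7_6 q_1_7_7 q_2_3_1 q_2_3_2 q_2_3_3 q_2_3_4 q_2_3_5 q_2_3_6 q_2_3_7 q_2_4_4 q_2_4_5 q_2_4_6 q_2_4_7 q_2_5_1 q_2_5_2 q_2_5_3 q_2_5_4 q_2_5_5 q_2_5_6 q_2_5_7 q_2_6_4 q_2_6_5 q_2_6_7 q_2_7_4 q_2_7_5 q_2_7_7 q_3_4_1 q_3_4_2 q_3_4_3 q_3_4_4 q_3_4_5 q_3_4_6 q_3_4_7 q_3_5_5 q_3_5_7 q_3_6_5 q_3_6_7 q_3_7_5 q_3_7_7 q_4_5_6 q_4_5_7 q_4_6_6 q_4_6_7 q_4_7_6 q_4_7_7 q_5_6_7 q_5_7_7 q_6_7_7 by linarith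
  have z_3_6: "D (e7 6) \<bullet> e7 3 = 0" using q_1_2_1 q_1_2_2 q_1_2_3 q_1_2_4 q_1_2_5 q_1_2_6 q_1_2_7 q_1_3_4 q_1_3_5 q_1_3_6 q_1_3_7 q_1_4_1 q_1_4_2 q_1_4_3 q_1_4_4 q_1_4_5 q_1_4_6 q_1_4_7 q_1_5_1 q_1_5_2 q_1_5_3 q_1_5_4 q_1_5_5 q_1_5_6 q_1_5_7 q_1_6_1 q_1_6_2 q_1_6_3 q_1_6_4 q_1_6_5 q_1_6_6 q_1_6_7 q_1_7_4 q_1_7_6 q_1_7_7 q_2_3_1 q_2_3_2 q_2_3_3 q_2_3_4 q_2_3_5 q_2_3_6 q_2_3_7 q_2_4_4 q_2_4_5 q_2_4_6 q_2_4_7 q_2_5_1 q_2_5_2 q_2_5_3 q_2_5_4 q_2_5_5 q_2_5_6 q_2_5_7 q_2_6_4 q_2_6_5 q_2_6_7 q_2_7_4 q_2_7_5 q_2_7_7 q_3_4_1 q_3_4_2 q_3_4_3 q_3_4_4 q_3_4_5 q_3_4_6 q_3_4_7 q_3_5_5 q_3_5_7 q_3_6_5 q_3_6_7 q_3_7_5 q_3_7_7 q_4_5_6 q_4_5_7 q_4_6_6 q_4_6_7 q_4_7_6 q_4_7_7 q_5_6_7 q_5_7_7 q_6_7_7 by linarith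
  have z_4_6: "D (e7 6) \<bullet> e7 4 = 0" using q_1_2_1 q_1_2_2 q_1_2_3 q_1_2_4 q_1_2_5 q_1_2_6 q_1_2_7 q_1_3_4 q_1_3_5 q_1_3_6 q_1_3_7 q_1_4_1 q_1_4_2 q_1_4_3 q_1_4_4 q_1_4_5 q_1_4_6 q_1_4_7 q_1_5_1 q_1_5_2 q_1_5_3 q_1_5_4 q_1_5_5 q_1_5_6 q_1_5_7 q_1_6_1 q_1_6_2 q_1_6_3 q_1_6_4 q_1_6_5 q_1_6_6 q_1_6_7 q_1_7_4 q_1_7_6 q_1_7_7 q_2_3_1 q_2_3_2 q_2_3_3 q_2_3_4 q_2_3_5 q_2_3_6 q_2_3_7 q_2_4_4 q_2_4_5 q_2_4_6 q_2_4_7 q_2_5_1 q_2_5_2 q_2_5_3 q_2_5_4 q_2_5_5 q_2_5_6 q_2_5_7 q_2_6_4 q_2_6_5 q_2_6_7 q_2_7_4 q_2_7_5 q_2_7_7 q_3_4_1 q_3_4_2 q_3_4_3 q_3_4_4 q_3_4_5 q_3_4_6 q_3_4_7 q_3_5_5 q_3_5_7 q_3_6_5 q_3_6_7 q_3_7_5 q_3_7_7 q_4_5_6 q_4_5_7 q_4_6_6 q_4_6_7 q_4_7_6 q_4_7_7 q_5_6_7 q_5_7_7 q_6_7_7 by linarith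
  have z_5_6: "D (e7 6) \<bullet> e7 5 = 0" using q_1_2_1 q_1_2_2 q_1_2_3 q_1_2_4 q_1_2_5 q_1_2_6 q_1_2_7 q_1_3_4 q_1_3_5 q_1_3_6 q_1_3_7 q_1_4_1 q_1_4_2 q_1_4_3 q_1_4_4 q_1_4_5 q_1_4_6 q_1_4_7 q_1_5_1 q_1_5_2 q_1_5_3 q_1_5_4 q_1_5_5 q_1_5_6 q_1_5_7 q_1_6_1 q_1_6_2 q_1_6_3 q_1_6_4 q_1_6_5 q_1_6_6 q_1_6_7 q_1_7_4 q_1_7_6 q_1_7_7 q_2_3_1 q_2_3_2 q_2_3_3 q_2_3_4 q_2_3_5 q_2_3_6 q_2_3_7 q_2_4_4 q_2_4_5 q_2_4_6 q_2_4_7 q_2_5_1 q_2_5_2 q_2_5_3 q_2_5_4 q_2_5_5 q_2_5_6 q_2_5_7 q_2_6_4 q_2_6_5 q_2_6_7 q_2_7_4 q_2_7_5 q_2_7_7 q_3_4_1 q_3_4_2 q_3_4_3 q_3_4_4 q_3_4_5 q_3_4_6 q_3_4_7 q_3_5_5 q_3_5_7 q_3_6_5 q_3_6_7 q_3_7_5 q_3_7_7 q_4_5_6 q_4_5_7 q_4_6_6 q_4_6_7 q_4_7_6 q_4_7_7 q_5_6_7 q_5_7_7 q_6_7_7 by linarith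
  have z_1_7: "D (e7 7) \<bullet> e7 (Suc 0) = 0" using q_1_2_1 q_1_2_2 q_1_2_3 q_1_2_4 q_1_2_5 q_1_2_6 q_1_2_7 q_1_3_4 q_1_3_5 q_1_3_6 q_1_3_7 q_1_4_1 q_1_4_2 q_1_4_3 q_1_4_4 q_1_4_5 q_1_4_6 q_1_4_7 q_1_5_1 q_1_5_2 q_1_5_3 q_1_5_4 q_1_5_5 q_1_5_6 q_1_5_7 q_1_6_1 q_1_6_2 q_1_6_3 q_1_6_4 q_1_6_5 q_1_6_6 q_1_6_7 q_1_7_4 q_1_7_6 q_1_7_7 q_2_3_1 q_2_3_2 q_2_3_3 q_2_3_4 q_2_3_5 q_2_3_6 q_2_3_7 q_2_4_4 q_2_4_5 q_2_4_6 q_2_4_7 q_2_5_1 q_2_5_2 q_2_5_3 q_2_5_4 q_2_5_5 q_2_5_6 q_2_5_7 q_2_6_4 q_2_6_5 q_2_6_7 q_2_7_4 q_2_7_5 q_2_7_7 q_3_4_1 q_3_4_2 q_3_4_3 q_3_4_4 q_3_4_5 q_3_4_6 q_3_4_7 q_3_5_5 q_3_5_7 q_3_6_5 q_3_6_7 q_3_7_5 q_3_7_7 q_4_5_6 q_4_5_7 q_4_6_6 q_4_6_7 q_4_7_6 q_4_7_7 q_5_6_7 q_5_7_7 q_6_7_7 by linarith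
  have z_2_7: "D (e7 7) \<bullet> e7 2 = 0" using q_1_2_1 q_1_2_2 q_1_2_3 q_1_2_4 q_1_2_5 q_1_2_6 q_1_2_7 q_1_3_4 q_1_3_5 q_1_3_6 q_1_3_7 q_1_4_1 q_1_4_2 q_1_4_3 q_1_4_4 q_1_4_5 q_1_4_6 q_1_4_7 q_1_5_1 q_1_5_2 q_1_5_3 q_1_5_4 q_1_5_5 q_1_5_6 q_1_5_7 q_1_6_1 q_1_6_2 q_1_6_3 q_1_6_4 q_1_6_5 q_1_6_6 q_1_6_7 q_1_7_4 q_1_7_6 q_1_7_7 q_2_3_1 q_2_3_2 q_2_3_3 q_2_3_4 q_2_3_5 q_2_3_6 q_2_3_7 q_2_4_4 q_2_4_5 q_2_4_6 q_2_4_7 q_2_5_1 q_2_5_2 q_2_5_3 q_2_5_4 q_2_5_5 q_2_5_6 q_2_5_7 q_2_6_4 q_2_6_5 q_2_6_7 q_2_7_4 q_2_7_5 q_2_7_7 q_3_4_1 q_3_4_2 q_3_4_3 q_3_4_4 q_3_4_5 q_3_4_6 q_3_4_7 q_3_5_5 q_3_5_7 q_3_6_5 q_3_6_7 q_3_7_5 q_3_7_7 q_4_5_6 q_4_5_7 q_4_6_6 q_4_6_7 q_4_7_6 q_4_7_7 q_5_6_7 q_5_7_7 q_6_7_7 by linarith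
  have z_3_7: "D (e7 7) \<bullet> e7 3 = 0" using q_1_2_1 q_1_2_2 q_1_2_3 q_1_2_4 q_1_2_5 q_1_2_6 q_1_2_7 q_1_3_4 q_1_3_5 q_1_3_6 q_1_3_7 q_1_4_1 q_1_4_2 q_1_4_3 q_1_4_4 q_1_4_5 q_1_4_6 q_1_4_7 q_1_5_1 q_1_5_2 q_1_5_3 q_1_5_4 q_1_5_5 q_1_5_6 q_1_5_7 q_1_6_1 q_1_6_2 q_1_6_3 q_1_6_4 q_1_6_5 q_1_6_6 q_1_6_7 q_1_7_4 q_1_7_6 q_1_7_7 q_2_3_1 q_2_3_2 q_2_3_3 q_2_3_4 q_2_3_5 q_2_3_6 q_2_3_7 q_2_4_4 q_2_4_5 q_2_4_6 q_2_4_7 q_2_5_1 q_2_5_2 q_2_5_3 q_2_5_4 q_2_5_5 q_2_5_6 q_2_5_7 q_2_6_4 q_2_6_5 q_2_6_7 q_2_7_4 q_2_7_5 q_2_7_7 q_3_4_1 q_3_4_2 q_3_4_3 q_3_4_4 q_3_4_5 q_3_4_6 q_3_4_7 q_3_5_5 q_3_5_7 q_3_6_5 q_3_6_7 q_3_7_5 q_3_7_7 q_4_5_6 q_4_5_7 q_4_6_6 q_4_6_7 q_4_7_6 q_4_7_7 q_5_6_7 q_5_7_7 q_6_7_7 by linarith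
  have z_4_7: "D (e7 7) \<bullet> e7 4 = 0" using q_1_2_1 q_1_2_2 q_1_2_3 q_1_2_4 q_1_2_5 q_1_2_6 q_1_2_7 q_1_3_4 q_1_3_5 q_1_3_6 q_1_3_7 q_1_4_1 q_1_4_2 q_1_4_3 q_1_4_4 q_1_4_5 q_1_4_6 q_1_4_7 q_1_5_1 q_1_5_2 q_1_5_3 q_1_5_4 q_1_5_5 q_1_5_6 q_1_5_7 q_1_6_1 q_1_6_2 q_1_6_3 q_1_6_4 q_1_6_5 q_1_6_6 q_1_6_7 q_1_7_4 q_1_7_6 q_1_7_7 q_2_3_1 q_2_3_2 q_2_3_3 q_2_3_4 q_2_3_5 q_2_3_6 q_2_3_7 q_2_4_4 q_2_4_5 q_2_4_6 q_2_4_7 q_2_5_1 q_2_5_2 q_2_5_3 q_2_5_4 q_2_5_5 q_2_5_6 q_2_5_7 q_2_6_4 q_2_6_5 q_2_6_7 q_2_7_4 q_2_7_5 q_2_7_7 q_3_4_1 q_3_4_2 q_3_4_3 q_3_4_4 q_3_4_5 q_3_4_6 q_3_4_7 q_3_5_5 q_3_5_7 q_3_6_5 q_3_6_7 q_3_7_5 q_3_7_7 q_4_5_6 q_4_5_7 q_4_6_6 q_4_6_7 q_4_7_6 q_4_7_7 q_5_6_7 q_5_7_7 q_6_7_7 by linarith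
  have z_5_7: "D (e7 7) \<bullet> e7 5 = 0" using q_1_2_1 q_1_2_2 q_1_2_3 q_1_2_4 q_1_2_5 q_1_2_6 q_1_2_7 q_1_3_4 q_1_3_5 q_1_3_6 q_1_3_7 q_1_4_1 q_1_4_2 q_1_4_3 q_1_4_4 q_1_4_5 q_1_4_6 q_1_4_7 q_1_5_1 q_1_5_2 q_1_5_3 q_1_5_4 q_1_5_5 q_1_5_6 q_1_5_7 q_1_6_1 q_1_6_2 q_1_6_3 q_1_6_4 q_1_6_5 q_1_6_6 q_1_6_7 q_1_7_4 q_1_7_6 q_1_7_7 q_2_3_1 q_2_3_2 q_2_3_3 q_2_3_4 q_2_3_5 q_2_3_6 q_2_3_7 q_2_4_4 q_2_4_5 q_2_4_6 q_2_4_7 q_2_5_1 q_2_5_2 q_2_5_3 q_2_5_4 q_2_5_5 q_2_5_6 q_2_5_7 q_2_6_4 q_2_6_5 q_2_6_7 q_2_7_4 q_2_7_5 q_2_7_7 q_3_4_1 q_3_4_2 q_3_4_3 q_3_4_4 q_3_4_5 q_3_4_6 q_3_4_7 q_3_5_5 q_3_5_7 q_3_6_5 q_3_6_7 q_3_7_5 q_3_7_7 q_4_5_6 q_4_5_7 q_4_6_6 q_4_6_7 q_4_7_6 q_4_7_7 q_5_6_7 q_5_7_7 q_6_7_7 by linarith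
  have z_6_7: "D (e7 7) \<bullet> e7 6 = 0" using q_1_2_1 q_1_2_2 q_1_2_3 q_1_2_4 q_1_2_5 q_1_2_6 q_1_2_7 q_1_3_4 q_1_3_5 q_1_3_6 q_1_3_7 q_1_4_1 q_1_4_2 q_1_4_3 q_1_4_4 q_1_4_5 q_1_4_6 q_1_4_7 q_1_5_1 q_1_5_2 q_1_5_3 q_1_5_4 q_1_5_5 q_1_5_6 q_1_5_7 q_1_6_1 q_1_6_2 q_1_6_3 q_1_6_4 q_1_6_5 q_1_6_6 q_1_6_7 q_1_7_4 q_1_7_6 q_1_7_7 q_2_3_1 q_2_3_2 q_2_3_3 q_2_3_4 q_2_3_5 q_2_3_6 q_2_3_7 q_2_4_4 q_2_4_5 q_2_4_6 q_2_4_7 q_2_5_1 q_2_5_2 q_2_5_3 q_2_5_4 q_2_5_5 q_2_5_6 q_2_5_7 q_2_6_4 q_2_6_5 q_2_6_7 q_2_7_4 q_2_7_5 q_2_7_7 q_3_4_1 q_3_4_2 q_3_4_3 q_3_4_4 q_3_4_5 q_3_4_6 q_3_4_7 q_3_5_5 q_3_5_7 q_3_6_5 q_3_6_7 q_3_7_5 q_3_7_7 q_4_5_6 q_4_5_7 q_4_6_6 q_4_6_7 q_4_7_6 q_4_7_7 q_5_6_7 q_5_7_7 q_6_7_7 by linarith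
  have d_2: "D (e7 2) \<bullet> e7 2 = 1 * (D (e7 (Suc 0)) \<bullet> e7 (Suc 0))" using q_1_2_1 q_1_2_2 q_1_2_3 q_1_2_4 q_1_2_5 q_1_2_6 q_1_2_7 q_1_3_4 q_1_3_5 q_1_3_6 q_1_3_7 q_1_4_1 q_1_4_2 q_1_4_3 q_1_4_4 q_1_4_5 q_1_4_6 q_1_4_7 q_1_5_1 q_1_5_2 q_1_5_3 q_1_5_4 q_1_5_5 q_1_5_6 q_1_5_7 q_1_6_1 q_1_6_2 q_1_6_3 q_1_6_4 q_1_6_5 q_1_6_6 q_1_6_7 q_1_7_4 q_1_7_6 q_1_7_7 q_2_3_1 q_2_3_2 q_2_3_3 q_2_3_4 q_2_3_5 q_2_3_6 q_2_3_7 q_2_4_4 q_2_4_5 q_2_4_6 q_2_4_7 q_2_5_1 q_2_5_2 q_2_5_3 q_2_5_4 q_2_5_5 q_2_5_6 q_2_5_7 q_2_6_4 q_2_6_5 q_2_6_7 q_2_7_4 q_2_7_5 q_2_7_7 q_3_4_1 q_3_4_2 q_3_4_3 q_3_4_4 q_3_4_5 q_3_4_6 q_3_4_7 q_3_5_5 q_3_5_7 q_3_6_5 q_3_6_7 q_3_7_5 q_3_7_7 q_4_5_6 q_4_5_7 q_4_6_6 q_4_6_7 q_4_7_6 q_4_7_7 q_5_6_7 q_5_7_7 q_6_7_7 by linarith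
  have d_3: "D (e7 3) \<bullet> e7 3 = 2 * (D (e7 (Suc 0)) \<bullet> e7 (Suc 0))" using q_1_2_1 q_1_2_2 q_1_2_3 q_1_2_4 q_1_2_5 q_1_2_6 q_1_2_7 q_1_3_4 q_1_3_5 q_1_3_6 q_1_3_7 q_1_4_1 q_1_4_2 q_1_4_3 q_1_4_4 q_1_4_5 q_1_4_6 q_1_4_7 q_1_5_1 q_1_5_2 q_1_5_3 q_1_5_4 q_1_5_5 q_1_5_6 q_1_5_7 q_1_6_1 q_1_6_2 q_1_6_3 q_1_6_4 q_1_6_5 q_1_6_6 q_1_6_7 q_1_7_4 q_1_7_6 q_1_7_7 q_2_3_1 q_2_3_2 q_2_3_3 q_2_3_4 q_2_3_5 q_2_3_6 q_2_3_7 q_2_4_4 q_2_4_5 q_2_4_6 q_2_4_7 q_2_5_1 q_2_5_2 q_2_5_3 q_2_5_4 q_2_5_5 q_2_5_6 q_2_5_7 q_2_6_4 q_2_6_5 q_2_6_7 q_2_7_4 q_2_7_5 q_2_7_7 q_3_4_1 q_3_4_2 q_3_4_3 q_3_4_4 q_3_4_5 q_3_4_6 q_3_4_7 q_3_5_5 q_3_5_7 q_3_6_5 q_3_6_7 q_3_7_5 q_3_7_7 q_4_5_6 q_4_5_7 q_4_6_6 q_4_6_7 q_4_7_6 q_4_7_7 q_5_6_7 q_5_7_7 q_6_7_7 by linarith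
  have d_4: "D (e7 4) \<bullet> e7 4 = 2 * (D (e7 (Suc 0)) \<bullet> e7 (Suc 0))" using q_1_2_1 q_1_2_2 q_1_2_3 q_1_2_4 q_1_2_5 q_1_2_6 q_1_2_7 q_1_3_4 q_1_3_5 q_1_3_6 q_1_3_7 q_1_4_1 q_1_4_2 q_1_4_3 q_1_4_4 q_1_4_5 q_1_4_6 q_1_4_7 q_1_5_1 q_1_5_2 q_1_5_3 q_1_5_4 q_1_5_5 q_1_5_6 q_1_5_7 q_1_6_1 q_1_6_2 q_1_6_3 q_1_6_4 q_1_6_5 q_1_6_6 q_1_6_7 q_1_7_4 q_1_7_6 q_1_7_7 q_2_3_1 q_2_3_2 q_2_3_3 q_2_3_4 q_2_3_5 q_2_3_6 q_2_3_7 q_2_4_4 q_2_4_5 q_2_4_6 q_2_4_7 q_2_5_1 q_2_5_2 q_2_5_3 q_2_5_4 q_2_5_5 q_2_5_6 q_2_5_7 q_2_6_4 q_2_6_5 q_2_6_7 q_2_7_4 q_2_7_5 q_2_7_7 q_3_4_1 q_3_4_2 q_3_4_3 q_3_4_4 q_3_4_5 q_3_4_6 q_3_4_7 q_3_5_5 q_3_5_7 q_3_6_5 q_3_6_7 q_3_7_5 q_3_7_7 q_4_5_6 q_4_5_7 q_4_6_6 q_4_6_7 q_4_7_6 q_4_7_7 q_5_6_7 q_5_7_7 q_6_7_7 by linarith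
  have d_5: "D (e7 5) \<bullet> e7 5 = 3 * (D (e7 (Suc 0)) \<bullet> e7 (Suc 0))" using q_1_2_1 q_1_2_2 q_1_2_3 q_1_2_4 q_1_2_5 q_1_2_6 q_1_2_7 q_1_3_4 q_1_3_5 q_1_3_6 q_1_3_7 q_1_4_1 q_1_4_2 q_1_4_3 q_1_4_4 q_1_4_5 q_1_4_6 q_1_4_7 q_1_5_1 q_1_5_2 q_1_5_3 q_1_5_4 q_1_5_5 q_1_5_6 q_1_5_7 q_1_6_1 q_1_6_2 q_1_6_3 q_1_6_4 q_1_6_5 q_1_6_6 q_1_6_7 q_1_7_4 q_1_7_6 q_1_7_7 q_2_3_1 q_2_3_2 q_2_3_3 q_2_3_4 q_2_3_5 q_2_3_6 q_2_3_7 q_2_4_4 q_2_4_5 q_2_4_6 q_2_4_7 q_2_5_1 q_2_5_2 q_2_5_3 q_2_5_4 q_2_5_5 q_2_5_6 q_2_5_7 q_2_6_4 q_2_6_5 q_2_6_7 q_2_7_4 q_2_7_5 q_2_7_7 q_3_4_1 q_3_4_2 q_3_4_3 q_3_4_4 q_3_4_5 q_3_4_6 q_3_4_7 q_3_5_5 q_3_5_7 q_3_6_5 q_3_6_7 q_3_7_5 q_3_7_7 q_4_5_6 q_4_5_7 q_4_6_6 q_4_6_7 q_4_7_6 q_4_7_7 q_5_6_7 q_5_7_7 q_6_7_7 by linarith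
  have d_6: "D (e7 6) \<bullet> e7 6 = 3 * (D (e7 (Suc 0)) \<bullet> e7 (Suc 0))" using q_1_2_1 q_1_2_2 q_1_2_3 q_1_2_4 q_1_2_5 q_1_2_6 q_1_2_7 q_1_3_4 q_1_3_5 q_1_3_6 q_1_3_7 q_1_4_1 q_1_4_2 q_1_4_3 q_1_4_4 q_1_4_5 q_1_4_6 q_1_4_7 q_1_5_1 q_1_5_2 q_1_5_3 q_1_5_4 q_1_5_5 q_1_5_6 q_1_5_7 q_1_6_1 q_1_6_2 q_1_6_3 q_1_6_4 q_1_6_5 q_1_6_6 q_1_6_7 q_1_7_4 q_1_7_6 q_1_7_7 q_2_3_1 q_2_3_2 q_2_3_3 q_2_3_4 q_2_3_5 q_2_3_6 q_2_3_7 q_2_4_4 q_2_4_5 q_2_4_6 q_2_4_7 q_2_5_1 q_2_5_2 q_2_5_3 q_2_5_4 q_2_5_5 q_2_5_6 q_2_5_7 q_2_6_4 q_2_6_5 q_2_6_7 q_2_7_4 q_2_7_5 q_2_7_7 q_3_4_1 q_3_4_2 q_3_4_3 q_3_4_4 q_3_4_5 q_3_4_6 q_3_4_7 q_3_5_5 q_3_5_7 q_3_6_5 q_3_6_7 q_3_7_5 q_3_7_7 q_4_5_6 q_4_5_7 q_4_6_6 q_4_6_7 q_4_7_6 q_4_7_7 q_5_6_7 q_5_7_7 q_6_7_7 by linarith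
  have d_7: "D (e7 7) \<bullet> e7 7 = 4 * (D (e7 (Suc 0)) \<bullet> e7 (Suc 0))" using q_1_2_1 q_1_2_2 q_1_2_3 q_1_2_4 q_1_2_5 q_1_2_6 q_1_2_7 q_1_3_4 q_1_3_5 q_1_3_6 q_1_3_7 q_1_4_1 q_1_4_2 q_1_4_3 q_1_4_4 q_1_4_5 q_1_4_6 q_1_4_7 q_1_5_1 q_1_5_2 q_1_5_3 q_1_5_4 q_1_5_5 q_1_5_6 q_1_5_7 q_1_6_1 q_1_6_2 q_1_6_3 q_1_6_4 q_1_6_5 q_1_6_6 q_1_6_7 q_1_7_4 q_1_7_6 q_1_7_7 q_2_3_1 q_2_3_2 q_2_3_3 q_2_3_4 q_2_3_5 q_2_3_6 q_2_3_7 q_2_4_4 q_2_4_5 q_2_4_6 q_2_4_7 q_2_5_1 q_2_5_2 q_2_5_3 q_2_5_4 q_2_5_5 q_2_5_6 q_2_5_7 q_2_6_4 q_2_6_5 q_2_6_7 q_2_7_4 q_2_7_5 q_2_7_7 q_3_4_1 q_3_4_2 q_3_4_3 q_3_4_4 q_3_4_5 q_3_4_6 q_3_4_7 q_3_5_5 q_3_5_7 q_3_6_5 q_3_6_7 q_3_7_5 q_3_7_7 q_4_5_6 q_4_5_7 q_4_6_6 q_4_6_7 q_4_7_6 q_4_7_7 q_5_6_7 q_5_7_7 q_6_7_7 by linarith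
  show ?thesis
    apply (rule exI[of _ "D (e7 1) \<bullet> e7 1"])
    apply (unfold set17)
    apply (simp add: z_1_2 z_1_3 z_2_3 z_1_4 z_2_4 z_3_4 z_1_5 z_2_5 z_3_5 z_4_5 z_1_6 z_2_6 z_3_6 z_4_6 z_5_6 z_1_7 z_2_7 z_3_7 z_4_7 z_5_7 z_6_7 d_2 d_3 d_4 d_5 d_6 d_7)
    done
qed



definition lev :: "nat \<Rightarrow> nat \<Rightarrow> nat" where
 "lev p q = (if (p \<le> 1 \<and> q \<le> 2) \<or> (p \<le> 2 \<and> q \<le> 1) then 4
   else if (p \<le> 2 \<and> q \<le> 3) \<or> (p \<le> 3 \<and> q \<le> 2) then 5
   else if (p \<le> 1 \<and> q \<le> 4) \<or> (p \<le> 4 \<and> q \<le> 1) then 6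
   else if (p \<le> 1 \<and> q \<le> 6) \<or> (p \<le> 6 \<and> q \<le> 1) \<or> (p \<le> 2 \<and> q \<le> 5) \<or> (p \<le> 5 \<and> q \<le> 2)
        \<or> (p \<le> 3 \<and> q \<le> 4) \<or> (p \<le> 4 \<and> q \<le> 3) then 7 else 8)"

definition dd :: "nat \<Rightarrow> real" where "dd j = real ((j + 1) div 2)"

definition aw :: "nat \<Rightarrow> real" where
  "aw j = (if j = 1 then -1 else if j = 2 then 1 else if j = 3 then -2 else if j = 4 then 2
     else if j = 5 then -1 else if j = 6 then 1 else 0)"

lemma num1: "\<forall>p\<in>{1..7}. \<forall>q\<in>{1..7}. \<forall>r\<in>{1..7}. lev p q \<le> r \<longrightarrow> dd r = dd p + dd q \<longrightarrow> aw r - aw p - aw q \<ge> 0"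
  unfolding set17 by (simp add: lev_def dd_def aw_def)

lemma num2: "\<forall>p\<in>{1..7}. \<forall>q\<in>{1..7}. \<forall>r\<in>{1..7}. lev p q \<le> r \<longrightarrow> p \<noteq> q \<longrightarrow> (2::real)^r - 2^p - 2^q \<ge> 0"
  unfolding set17 by (simp add: lev_def)

lemma num3: "\<forall>p\<in>{1..7}. \<forall>q\<in>{1..7}. p < lev p q \<and> q < lev p q"
  unfolding set17 by (simp add: lev_def)

lemma lev_le8: "lev p q \<le> 8" unfolding lev_def by auto

lemma brF:
  assumes p: "p \<in> {1..7}" and q: "q \<in> {1..7}" and x: "x \<in> Fs p" and y: "y \<in> Fs q"
  shows "bracket7 x y \<in> Fs (lev p q)"
proof -
  have xz: "x \<bullet> e7 i = 0" if "1 \<le> i" "i < p" for i using x that unfolding Fs_def by auto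
  have yz: "y \<bullet> e7 i = 0" if "1 \<le> i" "i < q" for i using y that unfolding Fs_def by auto
  note xs = xz[of 1] xz[of 2] xz[of 3] xz[of 4] xz[of 5] xz[of 6] xz[of "Suc 0"]
  note ys = yz[of 1] yz[of 2] yz[of 3] yz[of 4] yz[of 5] yz[of 6] yz[of "Suc 0"]
  have "bracket7 x y \<bullet> e7 j = 0" if j: "1 \<le> j" "j < lev p q" for j
  proof -
    have "j \<in> {1..7}" using j lev_le8[of p q] by auto
    then show ?thesis using p q j(2) unfolding set17 lev_def
      by (auto simp: brc xs ys)
  qed
  then show ?thesis unfolding Fs_def by auto
qed


theorem mainTheorem4:
  shows "\<not> einstein_nilradical bracket7"
proof
  assume "einstein_nilradical bracket7"
  then obtain ip c D where ipI: "is_inner_product ip" and dD: "is_derivation bracket7 D"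
    and ric: "\<And>Y Z. ricci bracket7 ip Y Z = ip (c *\<^sub>R Y + D Y) Z"
    unfolding einstein_nilradical_def is_nilsoliton_def by blast
  interpret I: ipsp ip by unfold_locales (rule ipI)
  obtain u where GS: "I.GSP 1 u" using I.GS_exists by blast
  have orth: "\<And>i j. i \<in> {1..7} \<Longrightarrow> j \<in> {1..7} \<Longrightarrow> ip (u i) (u j) = (if i = j then 1 else 0)"
    and uF: "\<And>k. k \<in> {1..7} \<Longrightarrow> u k \<in> Fs k"
    and eexp: "\<And>k. k \<in> {1..7} \<Longrightarrow> e7 k = (\<Sum>m\<in>{k..7}. ip (e7 k) (u m) *\<^sub>R u m)"
    and epos: "\<And>k. k \<in> {1..7} \<Longrightarrow> ip (e7 k) (u k) > 0"
    using GS unfolding I.GSP_def by auto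
  have ipe0: "ip (e7 k) (u r) = 0" if k: "k \<in> {1..7}" and r: "r \<in> {1..7}" and rk: "r < k" for k r
  proof -
    have "ip (e7 k) (u r) = ip (\<Sum>m\<in>{k..7}. ip (e7 k) (u m) *\<^sub>R u m) (u r)"
      by (metis eexp[OF k])
    also have "\<dots> = (\<Sum>m\<in>{k..7}. ip (e7 k) (u m) * ip (u m) (u r))"
      by (simp add: I.ip_sumL I.ip_scaleL)
    also have "\<dots> = 0"
      using k r rk by (intro sum.neutral) (auto simp: orth)
    finally show ?thesis .
  qed
  have efull: "e7 k = (\<Sum>m\<in>{1..7}. ip (e7 k) (u m) *\<^sub>R u m)" if k: "k \<in> {1..7}" for k
  proof -
    have "(\<Sum>m\<in>{1..7}. ip (e7 k) (u m) *\<^sub>R u m) = (\<Sum>m\<in>{k..7}. ip (e7 k) (u m) *\<^sub>R u m)"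
      using k by (intro sum.mono_neutral_right) (auto simp: ipe0)
    then show ?thesis using eexp[OF k] by simp
  qed
  have ipv: "ip v (u m) = (\<Sum>j\<in>{1..7}. (v \<bullet> e7 j) * ip (e7 j) (u m))" for v m
  proof -
    have "ip v (u m) = ip (\<Sum>j\<in>{1..7}. (v \<bullet> e7 j) *\<^sub>R e7 j) (u m)" by (metis decomp7)
    then show ?thesis by (simp add: I.ip_sumL I.ip_scaleL)
  qed
  have expand: "v = (\<Sum>m\<in>{1..7}. ip v (u m) *\<^sub>R u m)" for v
  proof -
    have "(\<Sum>m\<in>{1..7}. ip v (u m) *\<^sub>R u m) = (\<Sum>m\<in>{1..7}. \<Sum>j\<in>{1..7}. ((v \<bullet> e7 j) * ip (e7 j) (u m)) *\<^sub>R u m)"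
      by (intro sum.cong refl) (simp add: ipv[of v] scaleR_sum_left)
    also have "\<dots> = (\<Sum>j\<in>{1..7}. \<Sum>m\<in>{1..7}. ((v \<bullet> e7 j) * ip (e7 j) (u m)) *\<^sub>R u m)"
      by (rule sum.swap)
    also have "\<dots> = (\<Sum>j\<in>{1..7}. (v \<bullet> e7 j) *\<^sub>R (\<Sum>m\<in>{1..7}. ip (e7 j) (u m) *\<^sub>R u m))"
      by (simp add: scaleR_sum_right)
    also have "\<dots> = (\<Sum>j\<in>{1..7}. (v \<bullet> e7 j) *\<^sub>R e7 j)"
      by (intro sum.cong refl) (metis efull)
    also have "\<dots> = v" by (metis decomp7)
    finally show ?thesis by simp
  qed
  interpret O: ons ip bracket7 u
  proof unfold_locales
    show "bilinear bracket7" by (rule bil7)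
    show "\<And>x y. bracket7 x y = - bracket7 y x" by (rule anti7)
    show "\<And>i j. i \<in> {1..7} \<Longrightarrow> j \<in> {1..7} \<Longrightarrow> ip (u i) (u j) = (if i = j then 1 else 0)" by (rule orth)
    show "\<And>v. v = (\<Sum>k\<in>{1..7}. ip v (u k) *\<^sub>R u k)" by (rule expand)
  qed
  have ipF0: "ip v (u r) = 0" if v: "v \<in> Fs s" and r: "r \<in> {1..7}" and rs: "r < s" for v s r
    unfolding ipv[of v]
  proof (intro sum.neutral ballI)
    fix j :: nat assume j: "j \<in> {1..7}"
    show "v \<bullet> e7 j * ip (e7 j) (u r) = 0"
    proof (cases "j < s")
      case True then have "v \<bullet> e7 j = 0" using v j unfolding Fs_def by auto
      then show ?thesis by simp
    next
      case False then have "r < j" using rs by simp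
      then have "ip (e7 j) (u r) = 0" using ipe0[OF j r] by simp
      then show ?thesis by simp
    qed
  qed
  have ipFs: "ip v (u s) = (v \<bullet> e7 s) * ip (e7 s) (u s)" if v: "v \<in> Fs s" and s: "s \<in> {1..7}" for v s
  proof -
    have "ip v (u s) = (\<Sum>j\<in>{1..7}. if j = s then (v \<bullet> e7 s) * ip (e7 s) (u s) else 0)"
      unfolding ipv[of v]
    proof (intro sum.cong refl)
      fix j :: nat assume j: "j \<in> {1..7}"
      show "v \<bullet> e7 j * ip (e7 j) (u s) = (if j = s then (v \<bullet> e7 s) * ip (e7 s) (u s) else 0)"
      proof (cases "j < s")
        case True then have "v \<bullet> e7 j = 0" using v j unfolding Fs_def by auto
        then show ?thesis using True by simp
      next
        case False
        show ?thesis
        proof (cases "j = s")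
          case False': False
          then have "s < j" using False by simp
          then have "ip (e7 j) (u s) = 0" using ipe0[OF j s] by simp
          then show ?thesis using False' by simp
        qed simp
      qed
    qed
    also have "\<dots> = (v \<bullet> e7 s) * ip (e7 s) (u s)" using s by (simp add: sum.delta')
    finally show ?thesis .
  qed
  have uss: "u k \<bullet> e7 k \<noteq> 0" if k: "k \<in> {1..7}" for k
    using ipFs[OF uF[OF k] k] orth[OF k k] by auto
  have anti: "O.C p q r = - O.C q p r" for p q r
    unfolding O.C_def by (subst anti7) (simp add: I.ip_negL)
  have Ctri: "lev p q \<le> r" if p: "p \<in> {1..7}" and q: "q \<in> {1..7}" and r: "r \<in> {1..7}" and C: "O.C p q r \<noteq> 0" for p q r
  proof (rule ccontr)
    assume "\<not> lev p q \<le> r"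
    then have "O.C p q r = 0" unfolding O.C_def
      using ipF0[OF brF[OF p q uF[OF p] uF[OF q]] r] by simp
    then show False using C by simp
  qed
  have tri: "p < r \<and> q < r" if p: "p \<in> {1..7}" and q: "q \<in> {1..7}" and r: "r \<in> {1..7}" and C: "O.C p q r \<noteq> 0" for p q r
    using Ctri[OF p q r C] num3 p q by fastforce
  have C124: "O.C 1 2 4 \<noteq> 0"
  proof -
    have F: "bracket7 (u 1) (u 2) \<in> Fs 4" using brF[of 1 2 "u 1" "u 2"] uF by (simp add: lev_def)
    have "u 2 \<bullet> e7 1 = 0" using uF[of 2] unfolding Fs_def by auto
    then have "bracket7 (u 1) (u 2) \<bullet> e7 4 = (u 1 \<bullet> e7 1) * (u 2 \<bullet> e7 2)" by (simp add: brc4)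
    then have "O.C 1 2 4 = (u 1 \<bullet> e7 1) * (u 2 \<bullet> e7 2) * ip (e7 4) (u 4)"
      unfolding O.C_def using ipFs[OF F] by simp
    then show ?thesis using uss[of 1] uss[of 2] epos[of 4] by simp
  qed
  have ricf: "ricci bracket7 ip (u a) (u b) = (\<Sum>i\<in>{1..7}. \<Sum>m\<in>{1..7}. O.C m i a * O.C m i b / 4 - O.C i a m * O.C i b m / 2)"
    if a: "a \<in> {1..7}" and b: "b \<in> {1..7}" for a b
    unfolding O.ric_uv using ric_alg[where C = O.C and G = O.G and S = "{1..7}", OF anti tri a b O.G_C] by blast
  have ric_sym: "ricci bracket7 ip (u a) (u b) = ricci bracket7 ip (u b) (u a)" if a: "a \<in> {1..7}" and b: "b \<in> {1..7}" for a b
    unfolding ricf[OF a b] ricf[OF b a] by (simp add: mult.commute)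
  have Rdef: "ricci bracket7 ip (u a) (u b) = c * (if a = b then 1 else 0) + ip (D (u a)) (u b)"
    if a: "a \<in> {1..7}" and b: "b \<in> {1..7}" for a b
    unfolding ric using orth[OF a b] by (simp add: I.ip_addL I.ip_scaleL)
  obtain t where tD: "\<And>j. j \<in> {1..7} \<Longrightarrow> (\<forall>k\<in>{1..7}. k < j \<longrightarrow> D (e7 j) \<bullet> e7 k = 0) \<and> D (e7 j) \<bullet> e7 j = t * dd j"
    using der_struct[OF dD] unfolding dd_def by blast
  have linD: "linear D" and derD: "\<And>x y. D (bracket7 x y) = bracket7 (D x) y + bracket7 x (D y)"
    using dD unfolding is_derivation_def by auto
  have Dcoord: "D v \<bullet> e7 k = (\<Sum>m\<in>{1..7}. (v \<bullet> e7 m) * (D (e7 m) \<bullet> e7 k))" for v k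
  proof -
    have "D v = D (\<Sum>m\<in>{1..7}. (v \<bullet> e7 m) *\<^sub>R e7 m)" by (metis decomp7)
    also have "\<dots> = (\<Sum>m\<in>{1..7}. (v \<bullet> e7 m) *\<^sub>R D (e7 m))"
      by (simp add: linear_sum[OF linD] linear_scale[OF linD])
    finally show ?thesis by (simp add: inner_sum_left)
  qed
  have DuF: "D (u j) \<in> Fs j" if j: "j \<in> {1..7}" for j
    unfolding Fs_def
  proof (intro CollectI allI impI)
    fix k :: nat assume k: "1 \<le> k \<and> k < j"
    show "D (u j) \<bullet> e7 k = 0" unfolding Dcoord[of "u j"]
    proof (intro sum.neutral ballI)
      fix m :: nat assume m: "m \<in> {1..7}"
      show "u j \<bullet> e7 m * (D (e7 m) \<bullet> e7 k) = 0"
      proof (cases "m < j")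
        case True then have "u j \<bullet> e7 m = 0" using uF[OF j] m unfolding Fs_def by auto
        then show ?thesis by simp
      next
        case False then have "D (e7 m) \<bullet> e7 k = 0" using tD[OF m] k j by auto
        then show ?thesis by simp
      qed
    qed
  qed
  have Dujj: "D (u j) \<bullet> e7 j = t * dd j * (u j \<bullet> e7 j)" if j: "j \<in> {1..7}" for j
  proof -
    have "D (u j) \<bullet> e7 j = (\<Sum>m\<in>{1..7}. if m = j then t * dd j * (u j \<bullet> e7 j) else 0)"
      unfolding Dcoord[of "u j"]
    proof (intro sum.cong refl)
      fix m :: nat assume m: "m \<in> {1..7}"
      show "u j \<bullet> e7 m * (D (e7 m) \<bullet> e7 j) = (if m = j then t * dd j * (u j \<bullet> e7 j) else 0)"
      proof (cases "m < j")
        case True then have "u j \<bullet> e7 m = 0" using uF[OF j] m unfolding Fs_def by auto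
        then show ?thesis using True by simp
      next
        case False
        show ?thesis
        proof (cases "m = j")
          case True then show ?thesis using tD[OF j] by simp
        next
          case False': False
          then have "D (e7 m) \<bullet> e7 j = 0" using tD[OF m] j False by auto
          then show ?thesis using False' by simp
        qed
      qed
    qed
    also have "\<dots> = t * dd j * (u j \<bullet> e7 j)" using j by (simp add: sum.delta')
    finally show ?thesis .
  qed
  have DuLow: "ip (D (u j)) (u i) = 0" if j: "j \<in> {1..7}" and i: "i \<in> {1..7}" and ij: "i < j" for i j
    using ipF0[OF DuF[OF j] i ij] .
  have Dudiag: "ip (D (u j)) (u j) = t * dd j" if j: "j \<in> {1..7}" for j
  proof -
    have "ip (D (u j)) (u j) = t * dd j * ((u j \<bullet> e7 j) * ip (e7 j) (u j))"
      using ipFs[OF DuF[OF j] j] Dujj[OF j] by simp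
    also have "(u j \<bullet> e7 j) * ip (e7 j) (u j) = 1"
      using ipFs[OF uF[OF j] j] orth[OF j j] by simp
    finally show ?thesis by simp
  qed
  have Doff: "ip (D (u j)) (u i) = 0" if j: "j \<in> {1..7}" and i: "i \<in> {1..7}" and ij: "i \<noteq> j" for i j
  proof (cases "i < j")
    case True then show ?thesis using DuLow[OF j i] by simp
  next
    case False
    then have ji: "j < i" using ij by simp
    have "ip (D (u j)) (u i) = ricci bracket7 ip (u j) (u i)" using Rdef[OF j i] ij by simp
    also have "\<dots> = ricci bracket7 ip (u i) (u j)" by (rule ric_sym[OF j i])
    also have "\<dots> = ip (D (u i)) (u j)" using Rdef[OF i j] ij by simp
    also have "\<dots> = 0" using DuLow[OF i j ji] .
    finally show ?thesis .
  qed
  have Du: "D (u j) = (t * dd j) *\<^sub>R u j" if j: "j \<in> {1..7}" for j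
  proof -
    have "D (u j) = (\<Sum>m\<in>{1..7}. ip (D (u j)) (u m) *\<^sub>R u m)" by (rule expand)
    also have "\<dots> = (\<Sum>m\<in>{1..7}. if m = j then (t * dd j) *\<^sub>R u j else 0)"
      by (intro sum.cong refl) (auto simp: Dudiag[OF j] Doff[OF j])
    also have "\<dots> = (t * dd j) *\<^sub>R u j" using j by (simp add: sum.delta')
    finally show ?thesis .
  qed
  have ricjj: "ricci bracket7 ip (u j) (u j) = c + t * dd j" if j: "j \<in> {1..7}" for j
    using Rdef[OF j j] Dudiag[OF j] by simp
  have ricjj_f: "ricci bracket7 ip (u j) (u j) = (\<Sum>i\<in>{1..7}. \<Sum>m\<in>{1..7}. O.C m i j * O.C m i j / 4 - O.C i j m * O.C i j m / 2)"
    if j: "j \<in> {1..7}" for j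
    using ricf[OF j j] .
  have TW: "(\<Sum>j\<in>{1..7}. w j * ricci bracket7 ip (u j) (u j))
      = (\<Sum>p\<in>{1..7}. \<Sum>q\<in>{1..7}. \<Sum>r\<in>{1..7}. (O.C p q r)^2 * (w r - w p - w q) / 4)" for w
  proof -
    have "(\<Sum>j\<in>{1..7}. w j * ricci bracket7 ip (u j) (u j))
      = (\<Sum>j\<in>{1..7}. w j * (\<Sum>i\<in>{1..7}. \<Sum>m\<in>{1..7}. O.C m i j * O.C m i j / 4 - O.C i j m * O.C i j m / 2))"
      by (intro sum.cong refl) (simp add: ricjj_f)
    also have "\<dots> = (\<Sum>p\<in>{1..7}. \<Sum>q\<in>{1..7}. \<Sum>r\<in>{1..7}. (O.C p q r)^2 * (w r - w p - w q) / 4)"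
      by (rule trace_w[OF anti])
    finally show ?thesis .
  qed
  show False
  proof (cases "t = 0")
    case False
    have grad: "dd r = dd p + dd q" if p: "p \<in> {1..7}" and q: "q \<in> {1..7}" and r: "r \<in> {1..7}" and C: "O.C p q r \<noteq> 0" for p q r
    proof -
      have e1: "D (bracket7 (u p) (u q)) = (t * (dd p + dd q)) *\<^sub>R bracket7 (u p) (u q)"
        unfolding derD Du[OF p] Du[OF q] O.B_scaleL O.B_scaleR by (simp add: algebra_simps)
      have "ip (D (bracket7 (u p) (u q))) (u r) = ip (D (\<Sum>m\<in>{1..7}. O.C p q m *\<^sub>R u m)) (u r)"
        unfolding O.C_def by (metis expand)
      also have "\<dots> = (\<Sum>m\<in>{1..7}. O.C p q m * ip (D (u m)) (u r))"
        by (simp add: linear_sum[OF linD] linear_scale[OF linD] I.ip_sumL I.ip_scaleL)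
      also have "\<dots> = (\<Sum>m\<in>{1..7}. O.C p q m * (t * dd m) * ip (u m) (u r))"
        by (intro sum.cong refl) (simp add: Du I.ip_scaleL)
      also have "\<dots> = (\<Sum>m\<in>{1..7}. if m = r then O.C p q r * (t * dd r) else 0)"
        using r by (intro sum.cong refl) (auto simp: orth)
      also have "\<dots> = O.C p q r * (t * dd r)" using r by (simp add: sum.delta')
      finally have X: "ip (D (bracket7 (u p) (u q))) (u r) = O.C p q r * (t * dd r)" .
      have Y: "ip (D (bracket7 (u p) (u q))) (u r) = t * (dd p + dd q) * O.C p q r"
        unfolding e1 O.C_def by (simp add: I.ip_scaleL)
      have E2: "(t * O.C p q r) * dd r = (t * O.C p q r) * (dd p + dd q)"
        using X Y by (metis mult.commute mult.left_commute)
      have "t * O.C p q r \<noteq> 0" using C \<open>t \<noteq> 0\<close> by simp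
      then show ?thesis using E2 by simp
    qed
    have lhs: "(\<Sum>j\<in>{1..7}. aw j * ricci bracket7 ip (u j) (u j)) = 0"
    proof -
      have "(\<Sum>j\<in>{1..7}. aw j * ricci bracket7 ip (u j) (u j)) = (\<Sum>j\<in>{1..7}. aw j * (c + t * dd j))"
        by (intro sum.cong refl) (simp add: ricjj)
      also have "\<dots> = 0" unfolding set17 by (simp add: aw_def dd_def algebra_simps)
      finally show ?thesis .
    qed
    have "(\<Sum>p\<in>{1..7}. \<Sum>q\<in>{1..7}. \<Sum>r\<in>{1..7}. (O.C p q r)^2 * (aw r - aw p - aw q) / 4) > 0"
    proof (rule sum3_pos)
      fix p q r :: nat assume p: "p \<in> {1..7}" and q: "q \<in> {1..7}" and r: "r \<in> {1..7}"
      show "(O.C p q r)^2 * (aw r - aw p - aw q) / 4 \<ge> 0"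
      proof (cases "O.C p q r = 0")
        case False
        then have "aw r - aw p - aw q \<ge> 0"
          using num1 p q r Ctri[OF p q r False] grad[OF p q r False] by blast
        then show ?thesis by simp
      qed simp
    next
      show "(O.C 1 2 4)^2 * (aw 4 - aw 1 - aw 2) / 4 > 0" using C124 by (simp add: aw_def)
    qed auto
    then show False using TW[of aw] lhs by simp
  next
    case True
    have rc: "ricci bracket7 ip (u j) (u j) = c" if "j \<in> {1..7}" for j using ricjj[OF that] True by simp
    have pos1: "(\<Sum>p\<in>{1..7}. \<Sum>q\<in>{1..7}. \<Sum>r\<in>{1..7}. (O.C p q r)^2 / 4) > 0"
      by (rule sum3_pos[where x = 1 and y = 2 and z = 4]) (use C124 in auto)
    have s1: "(\<Sum>j\<in>{1..7}. (1::real) * ricci bracket7 ip (u j) (u j)) = 7 * c"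
      by (simp add: rc)
    have "(\<Sum>p\<in>{1..7}. \<Sum>q\<in>{1..7}. \<Sum>r\<in>{1..7}. (O.C p q r)^2 * ((1::real) - 1 - 1) / 4)
        = - (\<Sum>p\<in>{1..7}. \<Sum>q\<in>{1..7}. \<Sum>r\<in>{1..7}. (O.C p q r)^2 / 4)"
      by (simp add: sum_negf[symmetric])
    then have cneg: "7 * c < 0" using TW[of "\<lambda>_. 1"] s1 pos1 by simp
    have s2: "(\<Sum>j\<in>{1..7}. (2::real)^j * ricci bracket7 ip (u j) (u j)) = 254 * c"
    proof -
      have "(\<Sum>j\<in>{1..7}. (2::real)^j * ricci bracket7 ip (u j) (u j)) = (\<Sum>j\<in>{1..7}. (2::real)^j * c)"
        by (intro sum.cong refl) (simp add: rc)
      also have "\<dots> = 254 * c" unfolding set17 by (simp add: algebra_simps)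
      finally show ?thesis .
    qed
    have "(\<Sum>p\<in>{1..7}. \<Sum>q\<in>{1..7}. \<Sum>r\<in>{1..7}. (O.C p q r)^2 * ((2::real)^r - 2^p - 2^q) / 4) > 0"
    proof (rule sum3_pos)
      fix p q r :: nat assume p: "p \<in> {1..7}" and q: "q \<in> {1..7}" and r: "r \<in> {1..7}"
      show "(O.C p q r)^2 * ((2::real)^r - 2^p - 2^q) / 4 \<ge> 0"
      proof (cases "O.C p q r = 0")
        case False
        have "p \<noteq> q" using False anti[of p p r] by auto
        then have "(2::real)^r - 2^p - 2^q \<ge> 0"
          using num2 p q r Ctri[OF p q r False] by blast
        then show ?thesis by simp
      qed simp
    next
      show "(O.C 1 2 4)^2 * ((2::real)^4 - 2^1 - 2^2) / 4 > 0" using C124 by simp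
    qed auto
    then have "254 * c > 0" using TW[of "\<lambda>j. (2::real)^j"] s2 by simp
    then show False using cneg by simp
  qed
qed


end
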